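(* The distributive law $\zeta\colon T(\partial)\otimes_{\mathbb K}T(\chi)\to T(\chi)\otimes_{\mathbb K}T(\partial)$ descends to distributive laws of $\mathbb K$-algebras $\mathrm{Mag}\otimes_{\mathbb K}\mathrm{Braid}\to\mathrm{Braid}\otimes_{\mathbb K}\mathrm{Mag}$, $\mathrm{Simp}\otimes_{\mathbb K}\mathrm{Braid}\to\mathrm{Braid}\otimes_{\mathbb K}\mathrm{Simp}$, $\mathrm{Mag}\otimes_{\mathbb K}\mathrm{Sym}\to\mathrm{Sym}\otimes_{\mathbb K}\mathrm{Mag}$ and $\mathrm{Simp}\otimes_{\mathbb K}\mathrm{Sym}\to\mathrm{Sym}\otimes_{\mathbb K}\mathrm{Simp}$.
   Context: Let $\Bbbk$ be a field and $\mathbb{K}=\bigoplus_{n\in\mathbb N}\Bbbk1_n$ with $1_n1_m=\delta_{nm}1_n$. A faithful $\mathbb K$-bimodule is $V=\bigoplus_{n,m}V_{n,m}$ with $1_nx1_m=x$ for $x\in V_{n,m}$; $(V\otimes_{\mathbb K}W)_{n,\ell}=\bigoplus_mV_{n,m}\otimes W_{m,\ell}$. A $\mathbb K$-algebra is a faithful $\mathbb K$-bimodule with associative multiplication and unit $\mathbb K\to V$; $T(V)$ denotes the free $\mathbb K$-algebra. $\partial$ has basis $\partial^n_j\in\partial_{n+1,n}$ ($n\ge0$, $0\le j\le n$), $\chi$ has basis $\chi^n_i\in\chi_{n,n}$ ($n\ge1$, $0\le i\le n-1$). $\mathrm{Mag}=T(\partial)/\langle\partial^{n+1}_i\partial^n_j-\partial^{n+1}_{j+1}\partial^n_i:0\le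 i<j\le n\rangle$; $\mathrm{Simp}=T(\partial)/\langle\partial^{n+1}_i\partial^n_j-\partial^{n+1}_{j+1}\partial^n_i:0\le i\le j\le n\rangle$; $\mathrm{Braid}=T(\chi)/\langle\chi^n_i\chi^n_j-\chi^n_j\chi^n_i\ (|i-j|\ge2),\ \chi^n_i\chi^n_{i+1}\chi^n_i-\chi^n_{i+1}\chi^n_i\chi^n_{i+1}\ (0\le i\le n-2)\rangle$; $\mathrm{Sym}=\mathrm{Braid}/\langle\chi^n_i\chi^n_i-1_n\rangle$. A $\mathbb K$-bimodule map $\omega\colon\mathcal B\otimes_{\mathbb K}\mathcal A\to\mathcal A\otimes_{\mathbb K}\mathcal B$ between $\mathbb K$-algebras is a distributive law if $\omega(\mu_{\mathcal B}\otimes\mathcal A)=(\mathcal A\otimes\mu_{\mathcal B})(\omega\otimes\mathcal B)(\mathcal B\otimes\omega)$, $\omega(\mathcal B\otimes\mu_{\mathcal A})=(\mu_{\mathcal A}\otimes\mathcal B)(\mathcal A\otimes\omega)(\omega\otimes\mathcal A)$, $\omega(b\otimes1)=1\otimes b$, $\omega(1\otimes a)=a\otimes1$. $\zeta$ is the distributive law of free $\mathbb K$-algebras defined on generators by $\zeta(\partial_i^n\otimes\chi_j^n)=\chi^{n+1}_{j+1}\otimes\partial^n_i$ if $i<j$; $\chi^{n+1}_{i+1}\chi^{n+1}_i\otimes\partial^n_{i+1}$ if $i=j$; $\chi^{n+1}_{i-1}\chi^{n+1}_i\otimes\partial^n_{i-1}$ if $i=j+1$; $\chi^{n+1}_j\otimes\partial^n_i$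 if $i>j+1$, extended to words by successive application. "Descends" means $\zeta$ induces a well-defined map between the quotient bimodules which is a distributive law. *)

theory Defs
  imports "HOL-Library.Poly_Mapping"
begin

text \<open>A basis element of T(partial) (a composable word in the generators, or a unit 1_m)
is encoded as a pair (m, [j_1,...,j_k]) standing for the product
partial^{m+k-1}_{j_1} partial^{m+k-2}_{j_2} ... partial^{m}_{j_k}, which lies in
T(partial)_{m+k,m}; for k = 0 it is the unit 1_m.  Validity: the t-th letter (from the left,
t = 0..k-1) has superscript m+k-1-t, so its index must be at most that.\<close>

type_synonym pword = "nat \<times> nat list"

text \<open>A basis element of T(chi) is encoded as (n, [i_1,...,i_k]) standing for
chi^n_{i_1} ... chi^n_{i_k} in T(chi)_{n,n} (the unit 1_n if k = 0), with all i_t < n.\<close>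

type_synonym cword = "nat \<times> nat list"

definition pvalid :: "pword \<Rightarrow> bool" where
  "pvalid w \<longleftrightarrow> (\<forall>t < length (snd w). snd w ! t \<le> fst w + (length (snd w) - 1 - t))"

definition cvalid :: "cword \<Rightarrow> bool" where
  "cvalid w \<longleftrightarrow> (\<forall>i \<in> set (snd w). i < fst w)"

text \<open>Concatenation of words and the (partial) product of basis words; a non-composable
product is zero in a K-algebra, encoded by None.\<close>

definition pcat :: "pword \<Rightarrow> pword \<Rightarrow> pword" where
  "pcat x y = (fst y, snd x @ snd y)"

definition pmul :: "pword \<Rightarrow> pword \<Rightarrow> pword option" where
  "pmul x y = (if fst x = fst y + length (snd y) then Some (pcat x y) else None)"

definition ccat :: "cword \<Rightarrow> cword \<Rightarrow> cword" where
  "ccat x y = (fst x, snd x @ snd y)"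

definition cmul :: "cword \<Rightarrow> cword \<Rightarrow> cword option" where
  "cmul x y = (if fst x = fst y then Some (ccat x y) else None)"

text \<open>Composability for the K-balanced tensor products:
(T(partial) \<otimes>_K T(chi)) has basis the pairs (x,y) with right index of x = level of y;
(T(chi) \<otimes>_K T(partial)) has basis the pairs (y,x) with level of y = left index of x.\<close>

definition pc_compat :: "pword \<Rightarrow> cword \<Rightarrow> bool" where
  "pc_compat x y \<longleftrightarrow> fst x = fst y"

definition cp_compat :: "cword \<Rightarrow> pword \<Rightarrow> bool" where
  "cp_compat y x \<longleftrightarrow> fst y = fst x + length (snd x)"

definition vec :: "'b \<Rightarrow> ('b \<Rightarrow>\<^sub>0 'k::zero_neq_one)" where
  "vec b = Poly_Mapping.single b 1"

definition smul :: "'k::ring_1 \<Rightarrow> ('b \<Rightarrow>\<^sub>0 'k) \<Rightarrow> ('b \<Rightarrow>\<^sub>0 'k)" where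
  "smul c v = Poly_Mapping.map ((*) c) v"

definition kspan :: "('b \<Rightarrow>\<^sub>0 'k::ring_1) set \<Rightarrow> ('b \<Rightarrow>\<^sub>0 'k) set" where
  "kspan S = {v. \<exists>F c. finite F \<and> F \<subseteq> S \<and> v = (\<Sum>s\<in>F. smul (c s) s)}"

definition fspace :: "('b \<Rightarrow> bool) \<Rightarrow> ('b \<Rightarrow>\<^sub>0 'k::zero) set" where
  "fspace valid = {v. \<forall>b\<in>Poly_Mapping.keys v. valid b}"

definition mulv :: "('b \<Rightarrow> 'b \<Rightarrow> 'b option) \<Rightarrow> ('b \<Rightarrow>\<^sub>0 'k::ring_1) \<Rightarrow> ('b \<Rightarrow>\<^sub>0 'k) \<Rightarrow> ('b \<Rightarrow>\<^sub>0 'k)" where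
  "mulv bm u v = (\<Sum>a\<in>Poly_Mapping.keys u. \<Sum>b\<in>Poly_Mapping.keys v.
      (case bm a b of None \<Rightarrow> 0 | Some c \<Rightarrow> Poly_Mapping.single c (Poly_Mapping.lookup u a * Poly_Mapping.lookup v b)))"

definition ideal_gen :: "('b \<Rightarrow> bool) \<Rightarrow> ('b \<Rightarrow> 'b \<Rightarrow> 'b option) \<Rightarrow> ('b \<Rightarrow>\<^sub>0 'k::ring_1) set \<Rightarrow> ('b \<Rightarrow>\<^sub>0 'k) set" where
  "ideal_gen valid bm R = kspan {mulv bm (mulv bm (vec a) r) (vec b) | a b r. valid a \<and> valid b \<and> r \<in> R}"

definition tens :: "('a \<Rightarrow> 'b \<Rightarrow> bool) \<Rightarrow> ('a \<Rightarrow>\<^sub>0 'k::ring_1) \<Rightarrow> ('b \<Rightarrow>\<^sub>0 'k) \<Rightarrow> ('a \<times> 'b \<Rightarrow>\<^sub>0 'k)" where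
  "tens cpt u v = (\<Sum>a\<in>Poly_Mapping.keys u. \<Sum>b\<in>Poly_Mapping.keys v.
      (if cpt a b then Poly_Mapping.single (a, b) (Poly_Mapping.lookup u a * Poly_Mapping.lookup v b) else 0))"

text \<open>Kernel of the projection (T(V) \<otimes>_K T(W)) \<rightarrow> (T(V)/I \<otimes>_K T(W)/J), namely
I \<otimes> T(W) + T(V) \<otimes> J.\<close>

definition tens_ker :: "('a \<Rightarrow> 'b \<Rightarrow> bool) \<Rightarrow> ('a \<Rightarrow> bool) \<Rightarrow> ('b \<Rightarrow> bool) \<Rightarrow>
    ('a \<Rightarrow>\<^sub>0 'k::ring_1) set \<Rightarrow> ('b \<Rightarrow>\<^sub>0 'k) set \<Rightarrow> ('a \<times> 'b \<Rightarrow>\<^sub>0 'k) set" where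
  "tens_ker cpt validA validB I J =
     kspan ({tens cpt i w | i w. i \<in> I \<and> w \<in> fspace validB}
          \<union> {tens cpt u j | u j. u \<in> fspace validA \<and> j \<in> J})"

text \<open>zeta(partial^n_i \<otimes> chi^n_j), returning the chi-word (at level n+1) and the new
index of partial^n.\<close>

definition zgen :: "nat \<Rightarrow> nat \<Rightarrow> nat list \<times> nat" where
  "zgen i j =
     (if i < j then ([j + 1], i)
      else if i = j then ([i + 1, i], i + 1)
      else if i = j + 1 then ([i - 1, i], i - 1)
      else ([j], i))"

text \<open>Pass one generator partial through a chi-word, letter by letter from the left
(omega(b \<otimes> a_1 a_2) = (mu \<otimes> B)(A \<otimes> omega)(omega \<otimes> A)).\<close>

fun pass1 :: "nat \<Rightarrow> nat list \<Rightarrow> nat list \<times> nat" where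
  "pass1 i [] = ([], i)"
| "pass1 i (j # js) = (let (c, i') = zgen i j; (c', i'') = pass1 i' js in (c @ c', i''))"

text \<open>Pass a partial-word through a chi-word, the rightmost partial letter first
(omega(b_1 b_2 \<otimes> a) = (A \<otimes> mu)(omega \<otimes> B)(B \<otimes> omega)).\<close>

fun passw :: "nat list \<Rightarrow> nat list \<Rightarrow> nat list \<times> nat list" where
  "passw [] cs = (cs, [])"
| "passw (d # ds) cs = (let (cs1, ds1) = passw ds cs; (cs2, d') = pass1 d cs1 in (cs2, d' # ds1))"

definition zeta :: "pword \<Rightarrow> cword \<Rightarrow> cword \<times> pword" where
  "zeta x y = (let (cs, ds) = passw (snd x) (snd y) in ((fst x + length (snd x), cs), (fst x, ds)))"

definition zetav :: "(pword \<times> cword \<Rightarrow>\<^sub>0 'k::ring_1) \<Rightarrow> (cword \<times> pword \<Rightarrow>\<^sub>0 'k)" where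
  "zetav v = (\<Sum>p\<in>Poly_Mapping.keys v. Poly_Mapping.single (case_prod zeta p) (Poly_Mapping.lookup v p))"

text \<open>partial^{n+1}_i partial^n_j - partial^{n+1}_{j+1} partial^n_i, encoded (n,[i,j]) - (n,[j+1,i]).\<close>

definition mag_rels :: "(pword \<Rightarrow>\<^sub>0 'k::ring_1) set" where
  "mag_rels = {vec (n, [i, j]) - vec (n, [j + 1, i]) | n i j. i < j \<and> j \<le> n}"

definition simp_rels :: "(pword \<Rightarrow>\<^sub>0 'k::ring_1) set" where
  "simp_rels = {vec (n, [i, j]) - vec (n, [j + 1, i]) | n i j. i \<le> j \<and> j \<le> n}"

definition braid_rels :: "(cword \<Rightarrow>\<^sub>0 'k::ring_1) set" where
  "braid_rels =
     {vec (n, [i, j]) - vec (n, [j, i]) | n i j. i < n \<and> j < n \<and> (i + 2 \<le> j \<or> j + 2 \<le> i)}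
   \<union> {vec (n, [i, i + 1, i]) - vec (n, [i + 1, i, i + 1]) | n i. i + 2 \<le> n}"

definition sym_rels :: "(cword \<Rightarrow>\<^sub>0 'k::ring_1) set" where
  "sym_rels = braid_rels \<union> {vec (n, [i, i]) - vec (n, []) | n i. i < n}"

text \<open>With B = T(partial)/I_P and A = T(chi)/I_C, zeta descends if it maps the kernel of
T(partial)\<otimes>T(chi) \<rightarrow> B\<otimes>A into the kernel of T(chi)\<otimes>T(partial) \<rightarrow> A\<otimes>B (so that the
induced map B\<otimes>A \<rightarrow> A\<otimes>B is well defined), and the induced map satisfies the four
distributive-law axioms.  Equalities of the induced linear maps on the quotients are
expressed as: the two representatives' images differ by an element of the target kernel,
checked on the classes of basis tensors (which span the quotient tensor products).\<close>

definition descends :: "(pword \<Rightarrow>\<^sub>0 'k::field) set \<Rightarrow> (cword \<Rightarrow>\<^sub>0 'k) set \<Rightarrow> bool" where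
  "descends RP RC \<longleftrightarrow>
    (let IP = ideal_gen pvalid pmul RP;
         IC = ideal_gen cvalid cmul RC;
         Ksrc = tens_ker pc_compat pvalid cvalid IP IC;
         Ktgt = tens_ker cp_compat cvalid pvalid IC IP
     in (\<forall>v\<in>Ksrc. zetav v \<in> Ktgt)
      \<and> (\<forall>x1 x2 y. pvalid x1 \<and> pvalid x2 \<and> cvalid y \<and>
            fst x1 = fst x2 + length (snd x2) \<and> fst y = fst x2 \<longrightarrow>
            vec (zeta (pcat x1 x2) y)
              - vec (let (y', x2') = zeta x2 y; (y'', x1') = zeta x1 y' in (y'', pcat x1' x2'))
            \<in> Ktgt)
      \<and> (\<forall>x y1 y2. pvalid x \<and> cvalid y1 \<and> cvalid y2 \<and> fst y1 = fst x \<and> fst y2 = fst x \<longrightarrow>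
            vec (zeta x (ccat y1 y2))
              - vec (let (y1', x') = zeta x y1; (y2', x'') = zeta x' y2 in (ccat y1' y2', x''))
            \<in> Ktgt)
      \<and> (\<forall>x. pvalid x \<longrightarrow> vec (zeta x (fst x, [])) - vec ((fst x + length (snd x), []), x) \<in> Ktgt)
      \<and> (\<forall>y. cvalid y \<longrightarrow> vec (zeta (fst y, []) y) - vec (y, (fst y, [])) \<in> Ktgt))"

end

theory Submission
  imports Defs "HOL.Modules"
begin

lemma lookup_smul: "Poly_Mapping.lookup (smul c v) k = c * Poly_Mapping.lookup v k"
  unfolding smul_def by (simp add: Poly_Mapping.map.rep_eq when_def)

interpretation pm: module "smul :: 'k::comm_ring_1 \<Rightarrow> ('b \<Rightarrow>\<^sub>0 'k) \<Rightarrow> ('b \<Rightarrow>\<^sub>0 'k)"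
  by standard (auto intro!: poly_mapping_eqI simp: lookup_smul lookup_add algebra_simps)

lemma kspan_eq: "kspan S = pm.span S"
  unfolding kspan_def pm.span_explicit by blast

definition L :: "('b \<Rightarrow> ('c \<Rightarrow>\<^sub>0 'k::comm_ring_1)) \<Rightarrow> ('b \<Rightarrow>\<^sub>0 'k) \<Rightarrow> ('c \<Rightarrow>\<^sub>0 'k)" where
  "L g v = (\<Sum>b\<in>Poly_Mapping.keys v. smul (Poly_Mapping.lookup v b) (g b))"

lemma L_ext:
  assumes "finite S" "Poly_Mapping.keys v \<subseteq> S"
  shows "L g v = (\<Sum>b\<in>S. smul (Poly_Mapping.lookup v b) (g b))"
  unfolding L_def
  by (rule sum.mono_neutral_left) (use assms in \<open>auto simp: in_keys_iff\<close>)

lemma L_add: "L g (u + v) = L g u + L g v"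
proof -
  let ?S = "Poly_Mapping.keys u \<union> Poly_Mapping.keys v"
  have "L g (u+v) = (\<Sum>b\<in>?S. smul (Poly_Mapping.lookup (u+v) b) (g b))"
    by (rule L_ext) (auto simp: keys_add)
  also have "\<dots> = (\<Sum>b\<in>?S. smul (Poly_Mapping.lookup u b) (g b)) + (\<Sum>b\<in>?S. smul (Poly_Mapping.lookup v b) (g b))"
    by (simp add: lookup_add pm.scale_left_distrib sum.distrib)
  also have "\<dots> = L g u + L g v"
    by (subst (1 2) L_ext[where S="?S"]) auto
  finally show ?thesis .
qed

lemma L_smul: "L g (smul c v) = smul c (L g v)"
proof -
  have "L g (smul c v) = (\<Sum>b\<in>Poly_Mapping.keys v. smul (Poly_Mapping.lookup (smul c v) b) (g b))"
    by (rule L_ext) (auto simp: in_keys_iff lookup_smul)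
  also have "\<dots> = smul c (L g v)"
    by (simp add: L_def lookup_smul pm.scale_sum_right)
  finally show ?thesis .
qed

lemma L_zero [simp]: "L g 0 = 0"
  by (simp add: L_def)

lemma L_neg: "L g (- v) = - L g v"
  using L_add[of g v "-v"] by (simp add: eq_neg_iff_add_eq_0 add.commute)

lemma L_diff: "L g (u - v) = L g u - L g v"
  using L_add[of g u "-v"] L_neg[of g v] by simp

lemma L_vec [simp]: "L g (vec b :: _ \<Rightarrow>\<^sub>0 'k::comm_ring_1) = g b"
  by (simp add: L_def vec_def)

lemma L_sum: "L g (sum f A) = (\<Sum>a\<in>A. L g (f a))"
  by (induction A rule: infinite_finite_induct) (auto simp: L_add)

lemma single_smul: "Poly_Mapping.single c (x::'k::comm_ring_1) = smul x (vec c)"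
  by (rule poly_mapping_eqI) (simp add: lookup_smul vec_def lookup_single when_def)

lemma expand_vec: "v = L vec (v :: _ \<Rightarrow>\<^sub>0 'k::comm_ring_1)"
proof (rule poly_mapping_eqI)
  fix k
  have "(\<Sum>x\<in>Poly_Mapping.keys v. Poly_Mapping.lookup v x * (if x = k then 1 else 0)) =
        (\<Sum>x\<in>Poly_Mapping.keys v. if x = k then Poly_Mapping.lookup v x else 0)"
    by (rule sum.cong) auto
  also have "\<dots> = Poly_Mapping.lookup v k" by (simp add: in_keys_iff)
  finally show "Poly_Mapping.lookup v k = Poly_Mapping.lookup (L vec v) k"
    by (simp add: L_def lookup_sum lookup_smul vec_def lookup_single when_def)
qed

lemma L_span:
  assumes "v \<in> pm.span S" "\<And>s. s \<in> S \<Longrightarrow> L g s \<in> pm.span T"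
  shows "L g v \<in> pm.span T"
  using assms(1)
proof (induction rule: pm.span_induct_alt)
  case base then show ?case by (simp add: pm.span_zero)
next
  case (step c x y) then show ?case
    by (simp add: L_add L_smul pm.span_add pm.span_scale assms(2))
qed

lemma L_fun_add: "L (\<lambda>a. f a + h a) u = L f u + L h u"
  by (simp add: L_def pm.scale_right_distrib sum.distrib)

lemma L_fun_smul: "L (\<lambda>a. smul c (f a)) u = smul c (L f u)"
  by (simp add: L_def pm.scale_sum_right pm.scale_left_commute[of c] mult.commute)

lemma L_fun_neg: "L (\<lambda>a. - f a) u = - L f u"
  by (simp add: L_def pm.scale_minus_right sum_negf)

lemma L_fun_diff: "L (\<lambda>a. f a - h a) u = L f u - L h u"
  using L_fun_add[of f "\<lambda>a. - h a" u] L_fun_neg[of h u] by simp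

lemma L_L: "L g (L h w) = L (\<lambda>b. L g (h b)) w"
proof -
  have "L h w = (\<Sum>b\<in>Poly_Mapping.keys w. smul (Poly_Mapping.lookup w b) (h b))" by (simp add: L_def)
  then show ?thesis by (simp add: L_sum L_smul L_def[of "\<lambda>b. L g (h b)"])
qed

lemma L_in_span:
  assumes "\<And>b. b \<in> Poly_Mapping.keys v \<Longrightarrow> g b \<in> pm.span T"
  shows "L g v \<in> pm.span T"
  unfolding L_def by (rule pm.span_sum) (use assms in \<open>auto intro: pm.span_scale\<close>)

definition tv :: "('a \<Rightarrow> 'b \<Rightarrow> bool) \<Rightarrow> 'a \<Rightarrow> 'b \<Rightarrow> ('a \<times> 'b \<Rightarrow>\<^sub>0 'k::comm_ring_1)" where
  "tv cpt a b = (if cpt a b then vec (a, b) else 0)"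

lemma tens_L: "tens cpt u v = L (\<lambda>a. L (tv cpt a) v) u"
  unfolding tens_def L_def tv_def
  by (simp add: pm.scale_sum_right, intro sum.cong refl) (simp add: single_smul mult.commute pm.scale_zero_right)

definition mv :: "'b option \<Rightarrow> ('b \<Rightarrow>\<^sub>0 'k::comm_ring_1)" where
  "mv ox = (case ox of None \<Rightarrow> 0 | Some c \<Rightarrow> vec c)"

lemma mulv_L: "mulv bm u v = L (\<lambda>a. L (\<lambda>b. mv (bm a b)) v) u"
  unfolding mulv_def L_def mv_def
  by (simp add: pm.scale_sum_right, intro sum.cong refl) (auto simp: single_smul mult.commute pm.scale_zero_right split: option.split)

lemma zetav_L: "zetav v = L (\<lambda>p. vec (case_prod zeta p)) v"
  unfolding zetav_def L_def by (simp add: single_smul)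

lemma mulv_vec_left: "mulv bm (vec a) v = L (\<lambda>b. mv (bm a b)) v"
  by (simp add: mulv_L)

lemma mulv_vec_right: "mulv bm u (vec b) = L (\<lambda>a. mv (bm a b)) u"
  by (simp add: mulv_L)

lemma tens_vec_left: "tens cpt (vec a) v = L (tv cpt a) v"
  by (simp add: tens_L)

lemma tens_vec_right: "tens cpt u (vec b) = L (\<lambda>a. tv cpt a b) u"
  by (simp add: tens_L)

lemma pass1_append:
  "pass1 i (xs @ ys) = (case pass1 i xs of (c, i') \<Rightarrow> case pass1 i' ys of (c', i'') \<Rightarrow> (c @ c', i''))"
  by (induction xs arbitrary: i) (auto split: prod.splits)

lemma passw_append_ds:
  "passw (ds1 @ ds2) cs = (case passw ds2 cs of (cs1, e2) \<Rightarrow> case passw ds1 cs1 of (cs2, e1) \<Rightarrow> (cs2, e1 @ e2))"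
  by (induction ds1) (auto split: prod.splits)

lemma passw_append_cs:
  "passw ds (cs1 @ cs2) = (case passw ds cs1 of (c1, ds1) \<Rightarrow> case passw ds1 cs2 of (c2, ds2) \<Rightarrow> (c1 @ c2, ds2))"
  by (induction ds) (auto split: prod.splits simp: pass1_append)

lemma length_passw: "length (snd (passw ds cs)) = length ds"
  by (induction ds) (auto split: prod.splits)

lemma zgen_valid:
  assumes "i \<le> n" "j < n"
  shows "(\<forall>k\<in>set (fst (zgen i j)). k < Suc n) \<and> snd (zgen i j) \<le> n"
  using assms by (auto simp: zgen_def)

lemma pass1_valid:
  assumes "i \<le> n" "\<forall>j\<in>set js. j < n"
  shows "(\<forall>k\<in>set (fst (pass1 i js)). k < Suc n) \<and> snd (pass1 i js) \<le> n"
  using assms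
proof (induction js arbitrary: i)
  case Nil then show ?case by simp
next
  case (Cons j js)
  obtain c i' where z: "zgen i j = (c, i')" by force
  obtain c' i'' where p: "pass1 i' js = (c', i'')" by force
  from zgen_valid[of i n j] Cons.prems z have "\<forall>k\<in>set c. k < Suc n" "i' \<le> n" by auto
  with Cons.IH[of i'] Cons.prems p show ?case by (auto simp: z p)
qed

lemma pvalid_Nil [simp]: "pvalid (m, [])"
  by (simp add: pvalid_def)

lemma pvalid_Cons: "pvalid (m, d # ds) \<longleftrightarrow> d \<le> m + length ds \<and> pvalid (m, ds)"
  unfolding pvalid_def
proof safe
  assume h: "\<forall>t<length (snd (m, d # ds)). snd (m, d # ds) ! t \<le> fst (m, d # ds) + (length (snd (m, d # ds)) - 1 - t)"
  from h[rule_format, of 0] show "d \<le> m + length ds" by simp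
  fix t assume "t < length (snd (m, ds))"
  with h[rule_format, of "Suc t"] show "snd (m, ds) ! t \<le> fst (m, ds) + (length (snd (m, ds)) - 1 - t)" by simp
next
  fix t assume "d \<le> m + length ds" and h: "\<forall>t<length (snd (m, ds)). snd (m, ds) ! t \<le> fst (m, ds) + (length (snd (m, ds)) - 1 - t)"
    and t: "t < length (snd (m, d # ds))"
  then show "snd (m, d # ds) ! t \<le> fst (m, d # ds) + (length (snd (m, d # ds)) - 1 - t)"
    by (cases t) auto
qed

lemma pvalid_append: "pvalid (m, a @ b) \<longleftrightarrow> pvalid (m + length b, a) \<and> pvalid (m, b)"
  by (induction a) (auto simp: pvalid_Cons)

lemma passw_valid:
  assumes "pvalid (m, ds)" "\<forall>k\<in>set cs. k < m"
  shows "(\<forall>k\<in>set (fst (passw ds cs)). k < m + length ds) \<and> pvalid (m, snd (passw ds cs))"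
  using assms
proof (induction ds)
  case Nil then show ?case by simp
next
  case (Cons d ds)
  obtain cs1 ds1 where p: "passw ds cs = (cs1, ds1)" by force
  obtain cs2 d' where q: "pass1 d cs1 = (cs2, d')" by force
  from Cons.prems have v: "d \<le> m + length ds" "pvalid (m, ds)" by (auto simp: pvalid_Cons)
  with Cons.IH Cons.prems p have c1: "\<forall>k\<in>set cs1. k < m + length ds" "pvalid (m, ds1)" by auto
  from pass1_valid[OF v(1) c1(1)] q have "\<forall>k\<in>set cs2. k < Suc (m + length ds)" "d' \<le> m + length ds" by auto
  moreover have "length ds1 = length ds" using length_passw[of ds cs] p by simp
  ultimately show ?case using c1 by (simp add: p q pvalid_Cons)
qed

lemma zeta_valid:
  assumes "pvalid x" "cvalid y" "fst y = fst x"
  shows "cvalid (fst (zeta x y)) \<and> pvalid (snd (zeta x y)) \<and> fst (fst (zeta x y)) = fst x + length (snd x)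
     \<and> fst (snd (zeta x y)) = fst x \<and> length (snd (snd (zeta x y))) = length (snd x)"
proof -
  obtain m ds where x: "x = (m, ds)" by force
  obtain cs where y: "y = (m, cs)" using assms(3) x by (cases y) auto
  obtain cs' ds' where p: "passw ds cs = (cs', ds')" by force
  from passw_valid[of m ds cs] assms p x y have "\<forall>k\<in>set cs'. k < m + length ds" "pvalid (m, ds')"
    by (auto simp: cvalid_def)
  moreover have "length ds' = length ds" using length_passw[of ds cs] p by simp
  ultimately show ?thesis by (simp add: zeta_def x y p cvalid_def)
qed

definition cstep :: "(nat \<Rightarrow> nat list \<Rightarrow> nat list \<Rightarrow> bool) \<Rightarrow> nat \<Rightarrow> nat list \<Rightarrow> nat list \<Rightarrow> bool" where
  "cstep cr n u v \<longleftrightarrow> (\<exists>c e p q. u = c @ p @ e \<and> v = c @ q @ e \<and> cr n p q)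
      \<and> (\<forall>k\<in>set u. k < n) \<and> (\<forall>k\<in>set v. k < n)"

abbreviation ceq where "ceq cr n \<equiv> (cstep cr n)\<^sup>*\<^sup>*"

definition prel :: "(nat \<Rightarrow> nat \<Rightarrow> bool) \<Rightarrow> nat \<Rightarrow> nat list \<Rightarrow> nat list \<Rightarrow> bool" where
  "prel Q n p q \<longleftrightarrow> (\<exists>i j. Q i j \<and> j \<le> n \<and> (p = [i, j] \<and> q = [j + 1, i] \<or> p = [j + 1, i] \<and> q = [i, j]))"

definition pstep :: "(nat \<Rightarrow> nat \<Rightarrow> bool) \<Rightarrow> pword \<Rightarrow> pword \<Rightarrow> bool" where
  "pstep Q x x' \<longleftrightarrow> fst x = fst x' \<and>
     (\<exists>a b p q. snd x = a @ p @ b \<and> snd x' = a @ q @ b \<and> prel Q (fst x + length b) p q)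
     \<and> pvalid x \<and> pvalid x'"

lemma ceq_valid: "ceq cr n u v \<Longrightarrow> \<forall>k\<in>set u. k < n \<Longrightarrow> \<forall>k\<in>set v. k < n"
  by (induction rule: rtranclp_induct) (simp_all add: cstep_def)

lemma cstepI:
  assumes "u = c @ p @ e" "v = c @ q @ e" "cr n p q" "\<forall>k\<in>set u. k < n" "\<forall>k\<in>set v. k < n"
  shows "cstep cr n u v"
  unfolding cstep_def using assms by (intro conjI exI) 

lemma cstepE:
  assumes "cstep cr n u v"
  obtains c e p q where "u = c @ p @ e" "v = c @ q @ e" "cr n p q" "\<forall>k\<in>set u. k < n" "\<forall>k\<in>set v. k < n"
  using assms unfolding cstep_def by blast

lemma ceq_cong:
  assumes "ceq cr n u v" "\<forall>k\<in>set c. k < n" "\<forall>k\<in>set e. k < n"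
  shows "ceq cr n (c @ u @ e) (c @ v @ e)"
  using assms(1)
proof (induction rule: rtranclp_induct)
  case base then show ?case by simp
next
  case (step w v)
  from step(2) obtain c' e' p q where h: "w = c' @ p @ e'" "v = c' @ q @ e'" "cr n p q"
    "\<forall>k\<in>set w. k < n" "\<forall>k\<in>set v. k < n" by (rule cstepE)
  have "cstep cr n (c @ w @ e) (c @ v @ e)"
    by (rule cstepI[of _ "c @ c'" p "e' @ e" _ q]) (use h assms(2,3) in auto)
  with step(3) show ?case by (rule rtranclp.rtrancl_into_rtrancl)
qed

lemma ceq_append:
  assumes "ceq cr n s1 s2" "ceq cr n t1 t2" "\<forall>k\<in>set s1. k < n" "\<forall>k\<in>set t1. k < n"
  shows "ceq cr n (s1 @ t1) (s2 @ t2)"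
proof -
  have v2: "\<forall>k\<in>set s2. k < n" using ceq_valid[OF assms(1,3)] .
  have "ceq cr n ([] @ s1 @ t1) ([] @ s2 @ t1)" by (rule ceq_cong[OF assms(1)]) (simp_all add: assms(4))
  moreover have "ceq cr n (s2 @ t1 @ []) (s2 @ t2 @ [])"
    by (rule ceq_cong[OF assms(2) v2]) simp
  ultimately show ?thesis by simp
qed

lemma ceq_mono:
  assumes "\<And>n p q. cr n p q \<Longrightarrow> cr' n p q" "ceq cr n u v"
  shows "ceq cr' n u v"
  using assms(2)
proof (induction rule: rtranclp_induct)
  case base then show ?case by simp
next
  case (step w v)
  from step(2) obtain c e p q where h: "w = c @ p @ e" "v = c @ q @ e" "cr n p q"
    "\<forall>k\<in>set w. k < n" "\<forall>k\<in>set v. k < n" by (rule cstepE)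
  have "cstep cr' n w v" by (rule cstepI[where c=c and p=p and e=e and q=q and cr=cr' and n=n, OF h(1,2) assms(1)[OF h(3)] h(4,5)])
  with step(3) show ?case by (rule rtranclp.rtrancl_into_rtrancl)
qed

lemma ceq_sym:
  assumes "\<And>n p q. cr n p q \<Longrightarrow> cr n q p" "ceq cr n u v"
  shows "ceq cr n v u"
  using assms(2)
proof (induction rule: rtranclp_induct)
  case base then show ?case by simp
next
  case (step w v)
  from step(2) obtain c e p q where h: "w = c @ p @ e" "v = c @ q @ e" "cr n p q"
    "\<forall>k\<in>set w. k < n" "\<forall>k\<in>set v. k < n" by (rule cstepE)
  have "cstep cr n v w" by (rule cstepI[where c=c and p=q and e=e and q=p and cr=cr and n=n, OF h(2,1) assms(1)[OF h(3)] h(5,4)])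
  then show ?case by (rule converse_rtranclp_into_rtranclp[OF _ step(3)])
qed

section \<open>Invariance under the chi-relations\<close>

locale Cside =
  fixes cr :: "nat \<Rightarrow> nat list \<Rightarrow> nat list \<Rightarrow> bool"
  assumes LB: "\<And>n p q i. cr n p q \<Longrightarrow> i \<le> n \<Longrightarrow>
     snd (pass1 i p) = snd (pass1 i q) \<and> ceq cr (Suc n) (fst (pass1 i p)) (fst (pass1 i q))"
begin

lemma B1:
  assumes "ceq cr n u v" "i \<le> n"
  shows "snd (pass1 i u) = snd (pass1 i v) \<and> ceq cr (Suc n) (fst (pass1 i u)) (fst (pass1 i v))"
  using assms(1)
proof (induction rule: rtranclp_induct)
  case base then show ?case by simp
next
  case (step w v)
  from step(2) obtain c e p q where w: "w = c @ p @ e" and v: "v = c @ q @ e" and r: "cr n p q"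
    and vw: "\<forall>k\<in>set w. k < n" and vv: "\<forall>k\<in>set v. k < n" by (rule cstepE)
  obtain c' i1 where pc: "pass1 i c = (c', i1)" by force
  obtain p' i2 where pp: "pass1 i1 p = (p', i2)" by force
  obtain q' i2' where pq: "pass1 i1 q = (q', i2')" by force
  obtain e' i3 where pe: "pass1 i2 e = (e', i3)" by force
  have vc: "\<forall>k\<in>set c'. k < Suc n" "i1 \<le> n" using pass1_valid[of i n c] pc vw w assms(2) by auto
  from LB[OF r vc(2)] pp pq have eq: "i2' = i2" and cq: "ceq cr (Suc n) p' q'" by auto
  have ve: "\<forall>k\<in>set e'. k < Suc n"
  proof -
    have "i2 \<le> n" using pass1_valid[of i1 n p] pp vw w vc by auto
    then show ?thesis using pass1_valid[of i2 n e] pe vw w by auto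
  qed
  have "pass1 i w = (c' @ p' @ e', i3)" by (simp add: w pass1_append pc pp pe)
  moreover have "pass1 i v = (c' @ q' @ e', i3)" by (simp add: v pass1_append pc pq pe eq)
  moreover have "ceq cr (Suc n) (c' @ p' @ e') (c' @ q' @ e')" by (rule ceq_cong[OF cq vc(1) ve])
  ultimately show ?case using step(3) by auto
qed

lemma Bw:
  assumes "ceq cr m u v" "pvalid (m, ds)"
  shows "snd (passw ds u) = snd (passw ds v) \<and> ceq cr (m + length ds) (fst (passw ds u)) (fst (passw ds v))"
  using assms(2)
proof (induction ds)
  case Nil then show ?case using assms(1) by simp
next
  case (Cons d ds)
  obtain u1 e1 where pu: "passw ds u = (u1, e1)" by force
  obtain v1 e1' where pv: "passw ds v = (v1, e1')" by force
  from Cons have "d \<le> m + length ds" "pvalid (m, ds)" by (auto simp: pvalid_Cons)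
  with Cons.IH pu pv have "e1' = e1" "ceq cr (m + length ds) u1 v1" by auto
  with B1[of "m + length ds" u1 v1 d] \<open>d \<le> m + length ds\<close> show ?case
    by (auto simp: pu pv split: prod.splits)
qed

end


lemma passw_Nil_cs: "passw ds [] = ([], ds)"
  by (induction ds) auto

lemma zeta_eq: "passw ds cs = (cs', ds') \<Longrightarrow> zeta (m, ds) (k, cs) = ((m + length ds, cs'), (m, ds'))"
  by (simp add: zeta_def)

locale Pside = Cside +
  fixes Q :: "nat \<Rightarrow> nat \<Rightarrow> bool"
  assumes Qle: "\<And>i j. Q i j \<Longrightarrow> i \<le> j"
  and LA: "\<And>n p q k. prel Q n p q \<Longrightarrow> k < n \<Longrightarrow>
     ceq cr (n + 2) (fst (passw p [k])) (fst (passw q [k])) \<and>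
     (snd (passw p [k]) = snd (passw q [k]) \<or> prel Q n (snd (passw p [k])) (snd (passw q [k])))"
begin

lemma prel_valid: "prel Q n p q \<Longrightarrow> pvalid (n, p) \<and> pvalid (n, q) \<and> length p = 2 \<and> length q = 2"
  by (auto simp: prel_def pvalid_Cons dest: Qle)

lemma LAw:
  assumes "prel Q n p q" "\<forall>k\<in>set cs. k < n"
  shows "ceq cr (n + 2) (fst (passw p cs)) (fst (passw q cs)) \<and>
     (snd (passw p cs) = snd (passw q cs) \<or> prel Q n (snd (passw p cs)) (snd (passw q cs)))"
  using assms
proof (induction cs arbitrary: p q)
  case Nil then show ?case by (simp add: passw_Nil_cs)
next
  case (Cons k cs)
  obtain s1 p1 where a: "passw p [k] = (s1, p1)" by force
  obtain s2 q1 where b: "passw q [k] = (s2, q1)" by force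
  obtain t1 p2 where c: "passw p1 cs = (t1, p2)" by force
  obtain t2 q2 where d: "passw q1 cs = (t2, q2)" by force
  have k: "k < n" "\<forall>k\<in>set cs. k < n" using Cons.prems by auto
  from LA[OF Cons.prems(1) k(1)] a b have s: "ceq cr (n + 2) s1 s2" and r: "p1 = q1 \<or> prel Q n p1 q1" by auto
  from prel_valid[OF Cons.prems(1)] have vp: "pvalid (n, p)" "length p = 2" by auto
  from passw_valid[OF vp(1), of "[k]"] a k have vs1: "\<forall>k\<in>set s1. k < n + 2" and vp1: "pvalid (n, p1)"
    using vp by auto
  from passw_valid[OF vp1 k(2)] c length_passw[of p "[k]"] a vp
  have vt1: "\<forall>k\<in>set t1. k < n + 2" by auto
  have e1: "passw p (k # cs) = (s1 @ t1, p2)"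
    using passw_append_cs[of p "[k]" cs] a c by simp
  have e2: "passw q (k # cs) = (s2 @ t2, q2)"
    using passw_append_cs[of q "[k]" cs] b d by simp
  from r show ?case
  proof
    assume "p1 = q1"
    with c d have "t1 = t2" "p2 = q2" by auto
    then show ?thesis using ceq_append[OF s _ vs1 vt1, of t1] e1 e2 by simp
  next
    assume "prel Q n p1 q1"
    from Cons.IH[OF this k(2)] c d have "ceq cr (n + 2) t1 t2" "p2 = q2 \<or> prel Q n p2 q2" by auto
    then show ?thesis using ceq_append[OF s _ vs1 vt1] e1 e2 by simp
  qed
qed

lemma Aword:
  assumes "pstep Q x x'" "cvalid y" "fst y = fst x"
  shows "\<exists>N c c' w w'. zeta x y = ((N, c), w) \<and> zeta x' y = ((N, c'), w') \<and> ceq cr N c c'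
     \<and> (w = w' \<or> pstep Q w w')"
proof -
  obtain m ds where x: "x = (m, ds)" by force
  obtain ds' where x': "x' = (m, ds')" using assms(1) x unfolding pstep_def by (cases x') auto
  obtain cs where y: "y = (m, cs)" using assms(3) x by (cases y) auto
  from assms(1) obtain a b p q where dd: "ds = a @ p @ b" "ds' = a @ q @ b" and
    r: "prel Q (m + length b) p q" and vx: "pvalid x" and vx': "pvalid x'"
    unfolding pstep_def x x' by auto
  define n where "n = m + length b"
  have vpq: "pvalid (n, p)" "length p = 2" "length q = 2" using prel_valid[OF r] n_def by auto
  have va: "pvalid (n + 2, a)" and vb: "pvalid (m, b)"
    using vx vpq by (auto simp: x dd pvalid_append n_def)
  obtain c1 b' where pb: "passw b cs = (c1, b')" by force
  obtain c2 p' where pp: "passw p c1 = (c2, p')" by force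
  obtain c2' q' where pq: "passw q c1 = (c2', q')" by force
  obtain c3 a' where pa: "passw a c2 = (c3, a')" by force
  obtain c3' a'' where pa': "passw a c2' = (c3', a'')" by force
  have vc1: "\<forall>k\<in>set c1. k < n" using passw_valid[OF vb, of cs] assms(2) pb by (auto simp: y cvalid_def n_def)
  from LAw[OF r[folded n_def] vc1] pp pq have c2: "ceq cr (n + 2) c2 c2'" and r2: "p' = q' \<or> prel Q n p' q'" by auto
  from Bw[OF c2 va] pa pa' have "a'' = a'" and c3: "ceq cr (n + 2 + length a) c3 c3'" by auto
  have e1: "passw ds cs = (c3, a' @ p' @ b')" by (simp add: dd passw_append_ds pb pp pa)
  have e2: "passw ds' cs = (c3', a' @ q' @ b')" by (simp add: dd passw_append_ds pb pq pa' \<open>a'' = a'\<close>)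
  have z1: "zeta x y = ((n + 2 + length a, c3), (m, a' @ p' @ b'))"
    using zeta_eq[OF e1] by (simp add: x y dd vpq n_def)
  have z2: "zeta x' y = ((n + 2 + length a, c3'), (m, a' @ q' @ b'))"
    using zeta_eq[OF e2] by (simp add: x' y dd vpq n_def)
  have vv: "pvalid (m, a' @ p' @ b')" "pvalid (m, a' @ q' @ b')"
    using zeta_valid[of x y] zeta_valid[of x' y] assms vx vx' z1 z2 by (auto simp: x x' y)
  have "length b' = length b" using length_passw[of b cs] pb by simp
  have "p' = q' \<or> pstep Q (m, a' @ p' @ b') (m, a' @ q' @ b')"
  proof (cases "p' = q'")
    case False
    with r2 have "prel Q (m + length b') p' q'" using \<open>length b' = length b\<close> n_def by simp
    then have "\<exists>aa bb pp qq. a' @ p' @ b' = aa @ pp @ bb \<and> a' @ q' @ b' = aa @ qq @ bb \<and> prel Q (m + length bb) pp qq"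
      by blast
    then show ?thesis using vv unfolding pstep_def by simp
  qed simp
  then show ?thesis using z1 z2 c3 by auto
qed

end

lemma (in Cside) Bword:
  assumes "cstep cr m u v" "pvalid x" "fst x = m"
  shows "\<exists>N c c' w. zeta x (m, u) = ((N, c), w) \<and> zeta x (m, v) = ((N, c'), w) \<and> ceq cr N c c'"
proof -
  obtain ds where x: "x = (m, ds)" using assms(3) by (cases x) auto
  have "ceq cr m u v" using assms(1) by simp
  from Bw[OF this, of ds] assms(2) x show ?thesis
    by (auto simp: zeta_def split: prod.splits)
qed

lemma vec_keys: "Poly_Mapping.keys (vec x :: _ \<Rightarrow>\<^sub>0 'k::zero_neq_one) = {x}"
  by (simp add: vec_def)

lemma vec_fspace: "valid x \<Longrightarrow> (vec x :: _ \<Rightarrow>\<^sub>0 'k::zero_neq_one) \<in> fspace valid"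
  by (simp add: fspace_def vec_keys)

lemma ideal_gen_base:
  fixes R :: "('b \<Rightarrow>\<^sub>0 'k::field) set"
  assumes "valid a" "valid b" "r \<in> R"
  shows "mulv bm (mulv bm (vec a) r) (vec b) \<in> pm.span (ideal_gen valid bm R)"
  unfolding ideal_gen_def kspan_eq pm.span_span by (rule pm.span_base) (use assms in blast)

lemma ideal_gen_span: "ideal_gen valid bm (R :: (_ \<Rightarrow>\<^sub>0 'k::field) set) = pm.span (ideal_gen valid bm R)"
  unfolding ideal_gen_def kspan_eq pm.span_span ..

lemma mulv_gen:
  "mulv bm (mulv bm (vec a) (vec s1 - vec s2 :: _ \<Rightarrow>\<^sub>0 'k::field)) (vec b) =
   L (\<lambda>c. mv (bm c b)) (mv (bm a s1) - mv (bm a s2))"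
  by (simp add: mulv_vec_left mulv_vec_right L_diff)

lemma ideal_mem:
  fixes R :: "('b \<Rightarrow>\<^sub>0 'k::field) set"
  assumes "bm a sa = Some ta" "bm a sb = Some tb" "bm ta b = Some wa" "bm tb b = Some wb"
    "valid a" "valid b" "vec sa - vec sb \<in> R \<or> vec sb - vec sa \<in> R"
  shows "vec wa - vec wb \<in> ideal_gen valid bm R"
proof -
  have e1: "mulv bm (mulv bm (vec a) (vec sa - vec sb)) (vec b) = (vec wa - vec wb :: 'b \<Rightarrow>\<^sub>0 'k)"
    by (simp add: mulv_gen assms L_diff mv_def)
  have e2: "mulv bm (mulv bm (vec a) (vec sb - vec sa)) (vec b) = - (vec wa - vec wb :: 'b \<Rightarrow>\<^sub>0 'k)"
    by (simp add: mulv_gen assms L_diff mv_def)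
  from assms(7) show ?thesis
  proof
    assume "vec sa - vec sb \<in> R"
    from ideal_gen_base[OF assms(5,6) this, of bm] e1 show ?thesis by (simp add: ideal_gen_span[symmetric])
  next
    assume "vec sb - vec sa \<in> R"
    from ideal_gen_base[OF assms(5,6) this, of bm] e2
    have "- (vec wa - vec wb) \<in> pm.span (ideal_gen valid bm R)" by simp
    then have "- (- (vec wa - vec wb)) \<in> pm.span (ideal_gen valid bm R)" by (rule pm.span_neg)
    then show ?thesis by (simp add: ideal_gen_span[symmetric])
  qed
qed

lemma tens_vec_diff_right: "tens cpt (vec a1 - vec a2 :: _ \<Rightarrow>\<^sub>0 'k::field) (vec b) = tv cpt a1 b - tv cpt a2 b"
  by (simp add: tens_vec_right L_diff)

lemma tens_vec_diff_left: "tens cpt (vec a :: _ \<Rightarrow>\<^sub>0 'k::field) (vec b1 - vec b2) = tv cpt a b1 - tv cpt a b2"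
  by (simp add: tens_vec_left L_diff)

lemma tens_ker_span: "tens_ker cpt vA vB (I :: (_ \<Rightarrow>\<^sub>0 'k::field) set) J = pm.span (tens_ker cpt vA vB I J)"
  unfolding tens_ker_def kspan_eq pm.span_span ..

lemma tens_ker_left:
  fixes I :: "(_ \<Rightarrow>\<^sub>0 'k::field) set"
  assumes "i \<in> I" "vB w"
  shows "tens cpt i (vec w) \<in> tens_ker cpt vA vB I J"
proof -
  have "tens cpt i (vec w) \<in> {tens cpt i w | i w. i \<in> I \<and> w \<in> fspace vB}"
    by (rule CollectI, rule exI[of _ i], rule exI[of _ "vec w"]) (simp add: assms vec_fspace)
  then show ?thesis unfolding tens_ker_def kspan_eq by (intro pm.span_base UnI1)
qed

lemma tens_ker_right:
  fixes I :: "(_ \<Rightarrow>\<^sub>0 'k::field) set"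
  assumes "j \<in> J" "vA u"
  shows "tens cpt (vec u) j \<in> tens_ker cpt vA vB I J"
proof -
  have "tens cpt (vec u) j \<in> {tens cpt u j | u j. u \<in> fspace vA \<and> j \<in> J}"
    by (rule CollectI, rule exI[of _ "vec u"], rule exI[of _ j]) (simp add: assms vec_fspace)
  then show ?thesis unfolding tens_ker_def kspan_eq by (intro pm.span_base UnI2)
qed

lemma span_trans_diff:
  "(a :: _ \<Rightarrow>\<^sub>0 'k::field) - b \<in> pm.span S \<Longrightarrow> b - c \<in> pm.span S \<Longrightarrow> a - c \<in> pm.span S"
  using pm.span_add[of "a - b" S "b - c"] by simp

locale Main = Pside cr Q for cr Q +
  fixes RP :: "(pword \<Rightarrow>\<^sub>0 'k::field) set" and RC :: "(cword \<Rightarrow>\<^sub>0 'k) set"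
  assumes RP1: "\<And>r. r \<in> RP \<Longrightarrow> \<exists>n p q. r = vec (n, p) - vec (n, q) \<and> prel Q n p q"
  and RP2: "\<And>n p q. prel Q n p q \<Longrightarrow> vec (n, p) - vec (n, q) \<in> RP \<or> vec (n, q) - vec (n, p) \<in> RP"
  and RC1: "\<And>r. r \<in> RC \<Longrightarrow> \<exists>n p q. r = vec (n, p) - vec (n, q) \<and> cr n p q \<and> (\<forall>k\<in>set p. k < n) \<and> (\<forall>k\<in>set q. k < n)"
  and RC2: "\<And>n p q. cr n p q \<Longrightarrow> vec (n, p) - vec (n, q) \<in> RC \<or> vec (n, q) - vec (n, p) \<in> RC"
begin

abbreviation "IP \<equiv> ideal_gen pvalid pmul RP"
abbreviation "IC \<equiv> ideal_gen cvalid cmul RC"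
abbreviation "Ktgt \<equiv> tens_ker cp_compat cvalid pvalid IC IP"
abbreviation "Ksrc \<equiv> tens_ker pc_compat pvalid cvalid IP IC"

lemma Kt_trans: "a - b \<in> Ktgt \<Longrightarrow> b - c \<in> Ktgt \<Longrightarrow> a - c \<in> Ktgt"
  using span_trans_diff[of a b Ktgt c] by (simp add: tens_ker_span[symmetric])

lemma Kt_zero: "a - a \<in> Ktgt"
  using pm.span_zero[of Ktgt] by (simp add: tens_ker_span[symmetric])

lemma KT1:
  assumes "ceq cr N u v" "pvalid x" "N = fst x + length (snd x)"
  shows "vec ((N, u), x) - vec ((N, v), x) \<in> Ktgt"
  using assms(1)
proof (induction rule: rtranclp_induct)
  case base then show ?case using pm.span_zero[of Ktgt] by (simp add: tens_ker_span[symmetric])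
next
  case (step w v)
  from step(2) obtain c e p q where h: "w = c @ p @ e" "v = c @ q @ e" "cr N p q"
    "\<forall>k\<in>set w. k < N" "\<forall>k\<in>set v. k < N" by (rule cstepE)
  have "vec (N, w) - vec (N, v) \<in> IC"
    by (rule ideal_mem[where a="(N, c)" and b = "(N, e)" and sa = "(N, p)" and sb = "(N, q)" and ta = "(N, c @ p)" and tb = "(N, c @ q)"])
       (use h RC2 in \<open>auto simp: cmul_def ccat_def cvalid_def\<close>)
  from tens_ker_left[where vB=pvalid and w=x and cpt=cp_compat and vA=cvalid, OF this assms(2)] 
  have "vec ((N, w), x) - vec ((N, v), x) \<in> Ktgt"
    by (simp add: tens_vec_diff_right tv_def cp_compat_def assms(3))
  with step(3) show ?case using span_trans_diff[of _ _ Ktgt] by (simp add: tens_ker_span[symmetric])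
qed

lemma KT2:
  assumes "pstep Q x x'" "cvalid y" "fst y = fst x + length (snd x)"
  shows "vec (y, x) - vec (y, x') \<in> Ktgt"
proof -
  obtain m ds where x: "x = (m, ds)" by force
  obtain ds' where x': "x' = (m, ds')" using assms(1) x unfolding pstep_def by (cases x') auto
  from assms(1) obtain a b p q where dd: "ds = a @ p @ b" "ds' = a @ q @ b" and
    r: "prel Q (m + length b) p q" and vx: "pvalid (m, ds)"
    unfolding pstep_def x x' by auto
  define n where "n = m + length b"
  have vpq: "pvalid (n, p)" "length p = 2" "length q = 2" using prel_valid[OF r] n_def by auto
  have va: "pvalid (n + 2, a)" and vb: "pvalid (m, b)"
    using vx vpq by (auto simp: dd pvalid_append n_def)
  have "vec (m, ds) - vec (m, ds') \<in> IP"
    by (rule ideal_mem[where a="(n + 2, a)" and b = "(m, b)" and sa = "(n, p)" and sb = "(n, q)" and ta = "(n, a @ p)" and tb = "(n, a @ q)"])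
       (use vpq va vb RP2[OF r[folded n_def]] dd in \<open>simp_all add: pmul_def pcat_def n_def\<close>)
  from tens_ker_right[where vA=cvalid and u=y and cpt=cp_compat and vB=pvalid, OF this assms(2)]
  show ?thesis using vpq dd assms(3)
    by (simp add: tens_vec_diff_left tv_def cp_compat_def x x')
qed


lemma ZA:
  assumes "pstep Q x x'" "cvalid y" "fst y = fst x"
  shows "vec (zeta x y) - vec (zeta x' y) \<in> Ktgt"
proof -
  from Aword[OF assms] obtain N c c' w w' where z: "zeta x y = ((N, c), w)" "zeta x' y = ((N, c'), w')"
    and cc: "ceq cr N c c'" and ww: "w = w' \<or> pstep Q w w'" by blast
  from assms(1) obtain a b p q where h: "fst x = fst x'" "snd x = a @ p @ b" "snd x' = a @ q @ b"
    "prel Q (fst x + length b) p q" unfolding pstep_def by blast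
  have fx: "fst x = fst x'" "length (snd x) = length (snd x')"
    using h prel_valid[OF h(4)] by simp_all
  have vx: "pvalid x" "pvalid x'" using assms(1) unfolding pstep_def by auto
  from zeta_valid[OF vx(1) assms(2,3)] z
  have v1: "pvalid w" "N = fst w + length (snd w)" by auto
  from zeta_valid[OF vx(2) assms(2)] assms(3) fx z
  have v2: "cvalid (N, c')" "N = fst w' + length (snd w')" by auto
  have a: "vec ((N, c), w) - vec ((N, c'), w) \<in> Ktgt" by (rule KT1[OF cc v1])
  have b: "vec ((N, c'), w) - vec ((N, c'), w') \<in> Ktgt"
    using ww
  proof
    assume "w = w'" then show ?thesis using Kt_zero by simp
  next
    assume "pstep Q w w'"
    from KT2[OF this v2(1)] v1 show ?thesis by simp
  qed
  from Kt_trans[OF a b] z show ?thesis by simp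
qed

lemma ZB:
  assumes "cstep cr m u v" "pvalid x" "fst x = m"
  shows "vec (zeta x (m, u)) - vec (zeta x (m, v)) \<in> Ktgt"
proof -
  from Bword[OF assms] obtain N c c' w where z: "zeta x (m, u) = ((N, c), w)" "zeta x (m, v) = ((N, c'), w)"
    and cc: "ceq cr N c c'" by blast
  have "cvalid (m, u)" using assms(1) by (auto simp: cstep_def cvalid_def)
  from zeta_valid[OF assms(2) this] assms(3) z have "pvalid w" "N = fst w + length (snd w)" by auto
  from KT1[OF cc this] z show ?thesis by simp
qed


lemma Kt_span: "pm.span Ktgt = Ktgt"
  by (simp add: tens_ker_span[symmetric])

lemma gensP:
  assumes "pvalid A" "pvalid B" "r \<in> RP"
  shows "mulv pmul (mulv pmul (vec A) r) (vec B) = 0 \<or>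
    (\<exists>x1 x2. mulv pmul (mulv pmul (vec A) r) (vec B) = vec x1 - vec x2 \<and> pstep Q x1 x2)"
proof -
  from RP1[OF assms(3)] obtain n p q where r: "r = vec (n, p) - vec (n, q)" and pr: "prel Q n p q" by blast
  from prel_valid[OF pr] have vpq: "pvalid (n, p)" "pvalid (n, q)" "length p = 2" "length q = 2" by auto
  obtain m b where B: "B = (m, b)" by force
  obtain k a where A: "A = (k, a)" by force
  show ?thesis
  proof (cases "k = n + 2 \<and> n = m + length b")
    case False
    then show ?thesis unfolding r mulv_gen using vpq
      by (auto simp: A B pmul_def pcat_def mv_def L_diff)
  next
    case True
    then have e: "mulv pmul (mulv pmul (vec A) r) (vec B) = vec (m, a @ p @ b) - vec (m, a @ q @ b)"
      unfolding r mulv_gen using vpq by (simp add: A B pmul_def pcat_def mv_def L_diff)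
    have "pvalid (m, a @ p @ b)" "pvalid (m, a @ q @ b)"
      using assms(1,2) vpq True by (auto simp: A B pvalid_append)
    moreover have "\<exists>aa bb pp qq. a @ p @ b = aa @ pp @ bb \<and> a @ q @ b = aa @ qq @ bb \<and> prel Q (m + length bb) pp qq"
      using pr True by blast
    ultimately have "pstep Q (m, a @ p @ b) (m, a @ q @ b)" unfolding pstep_def by simp
    with e show ?thesis by blast
  qed
qed

lemma gensC:
  assumes "cvalid A" "cvalid B" "r \<in> RC"
  shows "mulv cmul (mulv cmul (vec A) r) (vec B) = 0 \<or>
    (\<exists>n u v. mulv cmul (mulv cmul (vec A) r) (vec B) = vec (n, u) - vec (n, v) \<and> cstep cr n u v)"
proof -
  from RC1[OF assms(3)] obtain n p q where r: "r = vec (n, p) - vec (n, q)" and pr: "cr n p q"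
    and vp: "\<forall>k\<in>set p. k < n" and vq: "\<forall>k\<in>set q. k < n" by blast
  obtain m b where B: "B = (m, b)" by force
  obtain k a where A: "A = (k, a)" by force
  show ?thesis
  proof (cases "k = n \<and> m = n")
    case False
    then show ?thesis unfolding r mulv_gen
      by (auto simp: A B cmul_def ccat_def mv_def L_diff)
  next
    case True
    then have e: "mulv cmul (mulv cmul (vec A) r) (vec B) = vec (n, a @ p @ b) - vec (n, a @ q @ b)"
      unfolding r mulv_gen by (simp add: A B cmul_def ccat_def mv_def L_diff)
    have "cstep cr n (a @ p @ b) (a @ q @ b)"
      by (rule cstepI[where c=a and e=b and p=p and q=q and u="a @ p @ b" and v="a @ q @ b" and cr=cr and n=n, OF refl refl pr])
         (use assms(1,2) vp vq True in \<open>auto simp: A B cvalid_def\<close>)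
    with e show ?thesis by blast
  qed
qed

lemma cond1: "\<forall>v\<in>Ksrc. zetav v \<in> Ktgt"
proof
  fix v assume v: "v \<in> Ksrc"
  define Z :: "pword \<times> cword \<Rightarrow> cword \<times> pword \<Rightarrow>\<^sub>0 'k" where "Z = (\<lambda>p. vec (case_prod zeta p))"
  have zv: "zetav u = L Z u" for u by (simp add: zetav_L Z_def)
  define GA where "GA = {tens pc_compat i w | i w. i \<in> IP \<and> w \<in> fspace cvalid}"
  define GB where "GB = {tens pc_compat u j | u j. u \<in> fspace pvalid \<and> j \<in> IC}"
  have "v \<in> pm.span (GA \<union> GB)" using v unfolding tens_ker_def kspan_eq GA_def GB_def .
  moreover have "L Z s \<in> pm.span Ktgt" if s: "s \<in> GA \<union> GB" for s
  proof -
    from s show ?thesis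
    proof
      assume "s \<in> GA"
      then obtain i w where s: "s = tens pc_compat i w" and i: "i \<in> IP" and w: "w \<in> fspace cvalid"
        unfolding GA_def by blast
      define F where "F = (\<lambda>a. L Z (L (tv pc_compat a) w))"
      have ls: "L Z s = L F i" by (simp add: s tens_L L_L F_def)
      have "i \<in> pm.span {mulv pmul (mulv pmul (vec a) r) (vec b) | a b r. pvalid a \<and> pvalid b \<and> r \<in> RP}"
        using i unfolding ideal_gen_def kspan_eq .
      then have "L F i \<in> pm.span Ktgt"
      proof (rule L_span)
        fix g assume "g \<in> {mulv pmul (mulv pmul (vec a) r) (vec b) | a b r. pvalid a \<and> pvalid b \<and> r \<in> RP}"
        then obtain A B r where g: "g = mulv pmul (mulv pmul (vec A) r) (vec B)" and h: "pvalid A" "pvalid B" "r \<in> RP"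
          by blast
        have gg: "g = 0 \<or> (\<exists>x1 x2. g = vec x1 - vec x2 \<and> pstep Q x1 x2)" using gensP[OF h] g by simp
        from gg show "L F g \<in> pm.span Ktgt"
        proof (elim disjE exE conjE)
          assume "g = 0" then show ?thesis by (simp add: pm.span_zero)
        next
          fix x1 x2 assume g2: "g = vec x1 - vec x2" and ps: "pstep Q x1 x2"
          have f12: "fst x1 = fst x2" using ps by (simp add: pstep_def)
          have vx: "pvalid x1" "pvalid x2" using ps by (auto simp: pstep_def)
          have "L F g = L (\<lambda>c. L Z (tv pc_compat x1 c - tv pc_compat x2 c)) w"
            by (simp add: g2 L_diff F_def L_fun_diff[symmetric] L_L)
          also have "\<dots> \<in> pm.span Ktgt"
          proof (rule L_in_span)
            fix c assume "c \<in> Poly_Mapping.keys w"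
            then have vc: "cvalid c" using w by (auto simp: fspace_def)
            show "L Z (tv pc_compat x1 c - tv pc_compat x2 c) \<in> pm.span Ktgt"
            proof (cases "fst c = fst x1")
              case True
              have "L Z (tv pc_compat x1 c - tv pc_compat x2 c) = vec (zeta x1 c) - vec (zeta x2 c)"
                using True f12 by (simp add: tv_def pc_compat_def L_diff Z_def)
              also have "\<dots> \<in> Ktgt" by (rule ZA[OF ps vc True])
              finally show ?thesis by (simp add: Kt_span)
            next
              case False
              then show ?thesis using f12 by (simp add: tv_def pc_compat_def pm.span_zero)
            qed
          qed
          finally show ?thesis .
        qed
      qed
      then show ?thesis by (simp add: ls)
    next
      assume "s \<in> GB"
      then obtain u j where s: "s = tens pc_compat u j" and j: "j \<in> IC" and u: "u \<in> fspace pvalid"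
        unfolding GB_def by blast
      have ls: "L Z s = L (\<lambda>a. L Z (L (tv pc_compat a) j)) u" by (simp add: s tens_L L_L)
      also have "\<dots> \<in> pm.span Ktgt"
      proof (rule L_in_span)
        fix x assume "x \<in> Poly_Mapping.keys u"
        then have vx: "pvalid x" using u by (auto simp: fspace_def)
        define G where "G = (\<lambda>c. L Z (tv pc_compat x c))"
        have lg: "L Z (L (tv pc_compat x) j) = L G j" by (simp add: L_L G_def)
        have "j \<in> pm.span {mulv cmul (mulv cmul (vec a) r) (vec b) | a b r. cvalid a \<and> cvalid b \<and> r \<in> RC}"
          using j unfolding ideal_gen_def kspan_eq .
        then have "L G j \<in> pm.span Ktgt"
        proof (rule L_span)
          fix g assume "g \<in> {mulv cmul (mulv cmul (vec a) r) (vec b) | a b r. cvalid a \<and> cvalid b \<and> r \<in> RC}"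
          then obtain A B r where g: "g = mulv cmul (mulv cmul (vec A) r) (vec B)" and h: "cvalid A" "cvalid B" "r \<in> RC"
            by blast
          have gg: "g = 0 \<or> (\<exists>n y1 y2. g = vec (n, y1) - vec (n, y2) \<and> cstep cr n y1 y2)"
            using gensC[OF h] g by simp
          from gg show "L G g \<in> pm.span Ktgt"
          proof (elim disjE exE conjE)
            assume "g = 0" then show ?thesis by (simp add: pm.span_zero)
          next
            fix n y1 y2 assume g2: "g = vec (n, y1) - vec (n, y2)" and cs: "cstep cr n y1 y2"
            show ?thesis
            proof (cases "fst x = n")
              case True
              have "L G g = vec (zeta x (n, y1)) - vec (zeta x (n, y2))"
                using True by (simp add: g2 L_diff G_def tv_def pc_compat_def Z_def)
              also have "\<dots> \<in> Ktgt" by (rule ZB[OF cs vx True])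
              finally show ?thesis by (simp add: Kt_span)
            next
              case False
              then show ?thesis by (simp add: g2 L_diff G_def tv_def pc_compat_def pm.span_zero)
            qed
          qed
        qed
        then show "L Z (L (tv pc_compat x) j) \<in> pm.span Ktgt" by (simp add: lg)
      qed
      finally show ?thesis .
    qed
  qed
  ultimately have "L Z v \<in> pm.span Ktgt" by (rule L_span)
  then show "zetav v \<in> Ktgt" by (simp add: zv Kt_span)
qed


lemma descends: "descends RP RC"
  unfolding descends_def Let_def
proof (intro conjI allI impI)
  show "\<forall>v\<in>Ksrc. zetav v \<in> Ktgt" by (rule cond1)
next
  fix x1 x2 :: pword and y :: cword
  assume h: "pvalid x1 \<and> pvalid x2 \<and> cvalid y \<and> fst x1 = fst x2 + length (snd x2) \<and> fst y = fst x2"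
  obtain cs1 e2 where p1: "passw (snd x2) (snd y) = (cs1, e2)" by force
  obtain cs2 e1 where p2: "passw (snd x1) cs1 = (cs2, e1)" by force
  have l2: "length e2 = length (snd x2)" using length_passw[of "snd x2" "snd y"] p1 by simp
  have "zeta (pcat x1 x2) y = (case zeta x2 y of (y', x2') \<Rightarrow> case zeta x1 y' of (y'', x1') \<Rightarrow> (y'', pcat x1' x2'))"
    using h l2 by (simp add: zeta_def pcat_def passw_append_ds p1 p2)
  then show "vec (zeta (pcat x1 x2) y) - vec (case zeta x2 y of (y', x2') \<Rightarrow> case zeta x1 y' of (y'', x1') \<Rightarrow> (y'', pcat x1' x2')) \<in> Ktgt"
    using Kt_zero by simp
next
  fix x :: pword and y1 y2 :: cword
  assume h: "pvalid x \<and> cvalid y1 \<and> cvalid y2 \<and> fst y1 = fst x \<and> fst y2 = fst x"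
  obtain c1 d1 where p1: "passw (snd x) (snd y1) = (c1, d1)" by force
  obtain c2 d2 where p2: "passw d1 (snd y2) = (c2, d2)" by force
  have l1: "length d1 = length (snd x)" using length_passw[of "snd x" "snd y1"] p1 by simp
  have "zeta x (ccat y1 y2) = (case zeta x y1 of (y1', x') \<Rightarrow> case zeta x' y2 of (y2', x'') \<Rightarrow> (ccat y1' y2', x''))"
    using h l1 by (simp add: zeta_def ccat_def passw_append_cs p1 p2)
  then show "vec (zeta x (ccat y1 y2)) - vec (case zeta x y1 of (y1', x') \<Rightarrow> case zeta x' y2 of (y2', x'') \<Rightarrow> (ccat y1' y2', x'')) \<in> Ktgt"
    using Kt_zero by simp
next
  fix x :: pword
  have "zeta x (fst x, []) = ((fst x + length (snd x), []), x)" by (simp add: zeta_def passw_Nil_cs)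
  then show "vec (zeta x (fst x, [])) - vec ((fst x + length (snd x), []), x) \<in> Ktgt" using Kt_zero by simp
next
  fix y :: cword
  have "zeta (fst y, []) y = (y, (fst y, []))" by (simp add: zeta_def)
  then show "vec (zeta (fst y, []) y) - vec (y, (fst y, [])) \<in> Ktgt" using Kt_zero by simp
qed

end

definition brel :: "nat \<Rightarrow> nat list \<Rightarrow> nat list \<Rightarrow> bool" where
  "brel n p q \<longleftrightarrow> (\<exists>a b. a < n \<and> b < n \<and> (a + 2 \<le> b \<or> b + 2 \<le> a) \<and> p = [a, b] \<and> q = [b, a])
     \<or> (\<exists>a. a + 2 \<le> n \<and> (p = [a, a + 1, a] \<and> q = [a + 1, a, a + 1] \<or> p = [a + 1, a, a + 1] \<and> q = [a, a + 1, a]))"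

definition srel :: "nat \<Rightarrow> nat list \<Rightarrow> nat list \<Rightarrow> bool" where
  "srel n p q \<longleftrightarrow> brel n p q \<or> (\<exists>a. a < n \<and> (p = [a, a] \<and> q = [] \<or> p = [] \<and> q = [a, a]))"

definition hd_rw :: "bool \<Rightarrow> nat list \<Rightarrow> nat list \<Rightarrow> bool" where
  "hd_rw s u v \<longleftrightarrow> (\<exists>x y r. u = x # y # r \<and> v = y # x # r \<and> (x + 2 \<le> y \<or> y + 2 \<le> x))
     \<or> (\<exists>x y r. u = x # y # x # r \<and> v = y # x # y # r \<and> (y = x + 1 \<or> x = y + 1))
     \<or> (s \<and> (\<exists>x r. u = x # x # r \<and> v = r \<or> v = x # x # r \<and> u = r))"

fun ost :: "bool \<Rightarrow> nat list \<Rightarrow> nat list \<Rightarrow> bool" where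
  "ost s [] v = hd_rw s [] v"
| "ost s (a # u) v = (hd_rw s (a # u) v \<or> (\<exists>v'. v = a # v' \<and> ost s u v'))"

lemma prel_simp: "prel Q n [x, y] [z, w] \<longleftrightarrow> (Q x y \<and> y \<le> n \<and> z = y + 1 \<and> w = x) \<or> (Q z w \<and> w \<le> n \<and> x = w + 1 \<and> y = z)"
  unfolding prel_def by auto

lemma LA0:
  assumes "i < j" "j \<le> n" "k < n"
  shows "(fst (passw [i, j] [k]) = fst (passw [j + 1, i] [k]) \<or> ost False (fst (passw [i, j] [k])) (fst (passw [j + 1, i] [k])))
    \<and> (snd (passw [i, j] [k]) = snd (passw [j + 1, i] [k]) \<or> prel (<) n (snd (passw [i, j] [k])) (snd (passw [j + 1, i] [k])))"
  using assms by (auto simp: zgen_def prel_simp hd_rw_def split: if_splits)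


lemma LA0le:
  assumes "i \<le> j" "j \<le> n" "k < n"
  shows "(fst (passw [i, j] [k]) = fst (passw [j + 1, i] [k]) \<or> ost False (fst (passw [i, j] [k])) (fst (passw [j + 1, i] [k])))
    \<and> (snd (passw [i, j] [k]) = snd (passw [j + 1, i] [k]) \<or> prel (\<le>) n (snd (passw [i, j] [k])) (snd (passw [j + 1, i] [k])))"
  using assms by (auto simp: zgen_def prel_simp hd_rw_def split: if_splits)

definition rel0 :: "bool \<Rightarrow> nat list \<Rightarrow> nat list \<Rightarrow> bool" where
  "rel0 s p q \<longleftrightarrow> (\<exists>x y. p = [x, y] \<and> q = [y, x] \<and> (x + 2 \<le> y \<or> y + 2 \<le> x))
     \<or> (\<exists>x y. p = [x, y, x] \<and> q = [y, x, y] \<and> (y = x + 1 \<or> x = y + 1))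
     \<or> (s \<and> (\<exists>x. p = [x, x] \<and> q = [] \<or> q = [x, x] \<and> p = []))"

lemma hd_rw_split:
  assumes "hd_rw s u v"
  shows "\<exists>p q e. u = p @ e \<and> v = q @ e \<and> rel0 s p q"
proof -
  from assms consider (c) x y r where "u = x # y # r" "v = y # x # r" "x + 2 \<le> y \<or> y + 2 \<le> x"
    | (b) x y r where "u = x # y # x # r" "v = y # x # y # r" "y = x + 1 \<or> x = y + 1"
    | (s1) x r where "s" "u = x # x # r" "v = r"
    | (s2) x r where "s" "v = x # x # r" "u = r"
    unfolding hd_rw_def by blast
  then show ?thesis
  proof cases
    case c then show ?thesis
      by (rule_tac x="[x, y]" in exI, rule_tac x="[y, x]" in exI, rule_tac x=r in exI) (auto simp: rel0_def)
  next
    case b then show ?thesis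
      by (rule_tac x="[x, y, x]" in exI, rule_tac x="[y, x, y]" in exI, rule_tac x=r in exI) (auto simp: rel0_def)
  next
    case s1 then show ?thesis
      by (rule_tac x="[x, x]" in exI, rule_tac x="[]" in exI, rule_tac x=r in exI) (auto simp: rel0_def)
  next
    case s2 then show ?thesis
      by (rule_tac x="[]" in exI, rule_tac x="[x, x]" in exI, rule_tac x=r in exI) (auto simp: rel0_def)
  qed
qed

lemma ost_split: "ost s u v \<Longrightarrow> \<exists>c p q e. u = c @ p @ e \<and> v = c @ q @ e \<and> rel0 s p q"
proof (induction u arbitrary: v)
  case Nil
  then obtain p q e where "[] = p @ e" "v = q @ e" "rel0 s p q" using hd_rw_split by fastforce
  then show ?case by (rule_tac x="[]" in exI) auto
next
  case (Cons a u)
  from Cons.prems have "hd_rw s (a # u) v \<or> (\<exists>v'. v = a # v' \<and> ost s u v')" by simp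
  then show ?case
  proof
    assume "hd_rw s (a # u) v"
    then obtain p q e where "a # u = p @ e" "v = q @ e" "rel0 s p q" using hd_rw_split by blast
    then show ?thesis by (rule_tac x="[]" in exI) auto
  next
    assume "\<exists>v'. v = a # v' \<and> ost s u v'"
    then obtain v' where v: "v = a # v'" "ost s u v'" by blast
    from Cons.IH[OF v(2)] obtain c p q e where "u = c @ p @ e" "v' = c @ q @ e" "rel0 s p q" by blast
    then show ?thesis using v by (rule_tac x="a # c" in exI) auto
  qed
qed

lemma rel0_brel:
  assumes "rel0 False p q" "\<forall>k\<in>set p. k < n" "\<forall>k\<in>set q. k < n"
  shows "brel n p q"
proof -
  from assms(1) consider (c) x y where "p = [x, y]" "q = [y, x]" "x + 2 \<le> y \<or> y + 2 \<le> x"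
    | (b1) x where "p = [x, x + 1, x]" "q = [x + 1, x, x + 1]"
    | (b2) y where "p = [y + 1, y, y + 1]" "q = [y, y + 1, y]"
    unfolding rel0_def by blast
  then show ?thesis
  proof cases
    case c then show ?thesis using assms(2,3) unfolding brel_def by auto
  next
    case b1 then show ?thesis using assms(2,3) unfolding brel_def by (intro disjI2, rule_tac x=x in exI) auto
  next
    case b2 then show ?thesis using assms(2,3) unfolding brel_def by (intro disjI2, rule_tac x=y in exI) auto
  qed
qed

lemma rel0_srel:
  assumes "rel0 True p q" "\<forall>k\<in>set p. k < n" "\<forall>k\<in>set q. k < n"
  shows "srel n p q"
proof (cases "rel0 False p q")
  case True then show ?thesis using rel0_brel assms unfolding srel_def by blast
next
  case False
  with assms(1) obtain x where "p = [x, x] \<and> q = [] \<or> q = [x, x] \<and> p = []" unfolding rel0_def by blast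
  then show ?thesis using assms(2,3) unfolding srel_def by auto
qed

lemma ost_cstep_B:
  assumes "ost False u v" "\<forall>k\<in>set u. k < n" "\<forall>k\<in>set v. k < n"
  shows "cstep brel n u v"
proof -
  from ost_split[OF assms(1)] obtain c p q e where h: "u = c @ p @ e" "v = c @ q @ e" "rel0 False p q" by blast
  have "brel n p q" by (rule rel0_brel[OF h(3)]) (use assms(2,3) h in auto)
  then show ?thesis by (rule cstepI[OF h(1,2) _ assms(2,3)])
qed

lemma ost_cstep_S:
  assumes "ost True u v" "\<forall>k\<in>set u. k < n" "\<forall>k\<in>set v. k < n"
  shows "cstep srel n u v"
proof -
  from ost_split[OF assms(1)] obtain c p q e where h: "u = c @ p @ e" "v = c @ q @ e" "rel0 True p q" by blast
  have "srel n p q" by (rule rel0_srel[OF h(3)]) (use assms(2,3) h in auto)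
  then show ?thesis by (rule cstepI[OF h(1,2) _ assms(2,3)])
qed

fun chainB :: "bool \<Rightarrow> nat list list \<Rightarrow> bool" where
  "chainB s (u # v # ws) = (ost s u v \<and> chainB s (v # ws))"
| "chainB s _ = True"

lemma chain_ceq_B:
  "chainB False (u # ws) \<Longrightarrow> last (u # ws) = v \<Longrightarrow> \<forall>w\<in>set (u # ws). \<forall>k\<in>set w. k < n \<Longrightarrow> ceq brel n u v"
proof (induction ws arbitrary: u)
  case Nil then show ?case by simp
next
  case (Cons w ws)
  then have "cstep brel n u w" by (intro ost_cstep_B) auto
  moreover have "ceq brel n w v" using Cons by auto
  ultimately show ?case by (rule converse_rtranclp_into_rtranclp)
qed

lemma chain_ceq_S:
  "chainB True (u # ws) \<Longrightarrow> last (u # ws) = v \<Longrightarrow> \<forall>w\<in>set (u # ws). \<forall>k\<in>set w. k < n \<Longrightarrow> ceq srel n u v"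
proof (induction ws arbitrary: u)
  case Nil then show ?case by simp
next
  case (Cons w ws)
  then have "cstep srel n u w" by (intro ost_cstep_S) auto
  moreover have "ceq srel n w v" using Cons by auto
  ultimately show ?case by (rule converse_rtranclp_into_rtranclp)
qed

lemma LBc:
  assumes A: "a + 2 \<le> b" "b < n" "i \<le> n"
  shows "snd (pass1 i [a, b]) = snd (pass1 i [b, a]) \<and> ceq brel (Suc n) (fst (pass1 i [a, b])) (fst (pass1 i [b, a]))"
proof -
  have "(i < a) \<or> (i = a) \<or> (i = a + 1) \<or> (a + 1 < i \<and> i < b) \<or> (i = b) \<or> (i = b + 1) \<or> (b + 1 < i)" by arith
  then show ?thesis
  proof (elim disjE)
    assume h: "i < a"
    have e1: "pass1 i [a, b] = ([a + 1, b + 1], i)" using h A by (simp add: zgen_def)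
    have e2: "pass1 i [b, a] = ([b + 1, a + 1], i)" using h A by (simp add: zgen_def)
    have "ceq brel (Suc n) [a + 1, b + 1] [b + 1, a + 1]"
      by (rule chain_ceq_B[where ws="[[b + 1, a + 1]]"]) (use h A in \<open>simp_all add: hd_rw_def\<close>)
    then show ?thesis unfolding e1 e2 by simp
  next
    assume h: "i = a"
    have e1: "pass1 i [a, b] = ([a + 1, a, b + 1], a + 1)" using h A by (simp add: zgen_def)
    have e2: "pass1 i [b, a] = ([b + 1, a + 1, a], a + 1)" using h A by (simp add: zgen_def)
    have "ceq brel (Suc n) [a + 1, a, b + 1] [b + 1, a + 1, a]"
      by (rule chain_ceq_B[where ws="[[a + 1, b + 1, a], [b + 1, a + 1, a]]"]) (use h A in \<open>simp_all add: hd_rw_def\<close>)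
    then show ?thesis unfolding e1 e2 by simp
  next
    assume h: "i = a + 1"
    have e1: "pass1 i [a, b] = ([a, a + 1, b + 1], a)" using h A by (simp add: zgen_def)
    have e2: "pass1 i [b, a] = ([b + 1, a, a + 1], a)" using h A by (simp add: zgen_def)
    have "ceq brel (Suc n) [a, a + 1, b + 1] [b + 1, a, a + 1]"
      by (rule chain_ceq_B[where ws="[[a, b + 1, a + 1], [b + 1, a, a + 1]]"]) (use h A in \<open>simp_all add: hd_rw_def\<close>)
    then show ?thesis unfolding e1 e2 by simp
  next
    assume h: "a + 1 < i \<and> i < b"
    have e1: "pass1 i [a, b] = ([a, b + 1], i)" using h A by (simp add: zgen_def)
    have e2: "pass1 i [b, a] = ([b + 1, a], i)" using h A by (simp add: zgen_def)
    have "ceq brel (Suc n) [a, b + 1] [b + 1, a]"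
      by (rule chain_ceq_B[where ws="[[b + 1, a]]"]) (use h A in \<open>simp_all add: hd_rw_def\<close>)
    then show ?thesis unfolding e1 e2 by simp
  next
    assume h: "i = b"
    have e1: "pass1 i [a, b] = ([a, b + 1, b], b + 1)" using h A by (simp add: zgen_def)
    have e2: "pass1 i [b, a] = ([b + 1, b, a], b + 1)" using h A by (simp add: zgen_def)
    have "ceq brel (Suc n) [a, b + 1, b] [b + 1, b, a]"
      by (rule chain_ceq_B[where ws="[[b + 1, a, b], [b + 1, b, a]]"]) (use h A in \<open>simp_all add: hd_rw_def\<close>)
    then show ?thesis unfolding e1 e2 by simp
  next
    assume h: "i = b + 1"
    have e1: "pass1 i [a, b] = ([a, b, b + 1], b)" using h A by (simp add: zgen_def)
    have e2: "pass1 i [b, a] = ([b, b + 1, a], b)" using h A by (simp add: zgen_def)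
    have "ceq brel (Suc n) [a, b, b + 1] [b, b + 1, a]"
      by (rule chain_ceq_B[where ws="[[b, a, b + 1], [b, b + 1, a]]"]) (use h A in \<open>simp_all add: hd_rw_def\<close>)
    then show ?thesis unfolding e1 e2 by simp
  next
    assume h: "b + 1 < i"
    have e1: "pass1 i [a, b] = ([a, b], i)" using h A by (simp add: zgen_def)
    have e2: "pass1 i [b, a] = ([b, a], i)" using h A by (simp add: zgen_def)
    have "ceq brel (Suc n) [a, b] [b, a]"
      by (rule chain_ceq_B[where ws="[[b, a]]"]) (use h A in \<open>simp_all add: hd_rw_def\<close>)
    then show ?thesis unfolding e1 e2 by simp
  qed
qed

lemma LBb:
  assumes A: "a + 2 \<le> n" "i \<le> n"
  shows "snd (pass1 i [a, a + 1, a]) = snd (pass1 i [a + 1, a, a + 1]) \<and> ceq brel (Suc n) (fst (pass1 i [a, a + 1, a])) (fst (pass1 i [a + 1, a, a + 1]))"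
proof -
  have "(i < a) \<or> (i = a) \<or> (i = a + 1) \<or> (i = a + 2) \<or> (a + 2 < i)" by arith
  then show ?thesis
  proof (elim disjE)
    assume h: "i < a"
    have e1: "pass1 i [a, a + 1, a] = ([a + 1, a + 2, a + 1], i)" using h A by (simp add: zgen_def)
    have e2: "pass1 i [a + 1, a, a + 1] = ([a + 2, a + 1, a + 2], i)" using h A by (simp add: zgen_def)
    have "ceq brel (Suc n) [a + 1, a + 2, a + 1] [a + 2, a + 1, a + 2]"
      by (rule chain_ceq_B[where ws="[[a + 2, a + 1, a + 2]]"]) (use h A in \<open>simp_all add: hd_rw_def\<close>)
    then show ?thesis unfolding e1 e2 by simp
  next
    assume h: "i = a"
    have e1: "pass1 i [a, a + 1, a] = ([a + 1, a, a + 2, a + 1, a], a + 2)" using h A by (simp add: zgen_def)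
    have e2: "pass1 i [a + 1, a, a + 1] = ([a + 2, a + 1, a, a + 2, a + 1], a + 2)" using h A by (simp add: zgen_def)
    have "ceq brel (Suc n) [a + 1, a, a + 2, a + 1, a] [a + 2, a + 1, a, a + 2, a + 1]"
      by (rule chain_ceq_B[where ws="[[a + 1, a + 2, a, a + 1, a], [a + 1, a + 2, a + 1, a, a + 1], [a + 2, a + 1, a + 2, a, a + 1], [a + 2, a + 1, a, a + 2, a + 1]]"]) (use h A in \<open>simp_all add: hd_rw_def\<close>)
    then show ?thesis unfolding e1 e2 by simp
  next
    assume h: "i = a + 1"
    have e1: "pass1 i [a, a + 1, a] = ([a, a + 1, a + 2, a + 1, a], a + 1)" using h A by (simp add: zgen_def)
    have e2: "pass1 i [a + 1, a, a + 1] = ([a + 2, a + 1, a, a + 1, a + 2], a + 1)" using h A by (simp add: zgen_def)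
    have "ceq brel (Suc n) [a, a + 1, a + 2, a + 1, a] [a + 2, a + 1, a, a + 1, a + 2]"
      by (rule chain_ceq_B[where ws="[[a, a + 2, a + 1, a + 2, a], [a + 2, a, a + 1, a + 2, a], [a + 2, a, a + 1, a, a + 2], [a + 2, a + 1, a, a + 1, a + 2]]"]) (use h A in \<open>simp_all add: hd_rw_def\<close>)
    then show ?thesis unfolding e1 e2 by simp
  next
    assume h: "i = a + 2"
    have e1: "pass1 i [a, a + 1, a] = ([a, a + 1, a + 2, a, a + 1], a)" using h A by (simp add: zgen_def)
    have e2: "pass1 i [a + 1, a, a + 1] = ([a + 1, a + 2, a, a + 1, a + 2], a)" using h A by (simp add: zgen_def)
    have "ceq brel (Suc n) [a, a + 1, a + 2, a, a + 1] [a + 1, a + 2, a, a + 1, a + 2]"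
      by (rule chain_ceq_B[where ws="[[a, a + 1, a, a + 2, a + 1], [a + 1, a, a + 1, a + 2, a + 1], [a + 1, a, a + 2, a + 1, a + 2], [a + 1, a + 2, a, a + 1, a + 2]]"]) (use h A in \<open>simp_all add: hd_rw_def\<close>)
    then show ?thesis unfolding e1 e2 by simp
  next
    assume h: "a + 2 < i"
    have e1: "pass1 i [a, a + 1, a] = ([a, a + 1, a], i)" using h A by (simp add: zgen_def)
    have e2: "pass1 i [a + 1, a, a + 1] = ([a + 1, a, a + 1], i)" using h A by (simp add: zgen_def)
    have "ceq brel (Suc n) [a, a + 1, a] [a + 1, a, a + 1]"
      by (rule chain_ceq_B[where ws="[[a + 1, a, a + 1]]"]) (use h A in \<open>simp_all add: hd_rw_def\<close>)
    then show ?thesis unfolding e1 e2 by simp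
  qed
qed

lemma LBs:
  assumes A: "a < n" "i \<le> n"
  shows "snd (pass1 i [a, a]) = snd (pass1 i []) \<and> ceq srel (Suc n) (fst (pass1 i [a, a])) (fst (pass1 i []))"
proof -
  have "(i < a) \<or> (i = a) \<or> (i = a + 1) \<or> (a + 1 < i)" by arith
  then show ?thesis
  proof (elim disjE)
    assume h: "i < a"
    have e1: "pass1 i [a, a] = ([a + 1, a + 1], i)" using h A by (simp add: zgen_def)
    have e2: "pass1 i [] = ([], i)" using h A by (simp add: zgen_def)
    have "ceq srel (Suc n) [a + 1, a + 1] []"
      by (rule chain_ceq_S[where ws="[[]]"]) (use h A in \<open>simp_all add: hd_rw_def\<close>)
    then show ?thesis unfolding e1 e2 by simp
  next
    assume h: "i = a"
    have e1: "pass1 i [a, a] = ([a + 1, a, a, a + 1], a)" using h A by (simp add: zgen_def)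
    have e2: "pass1 i [] = ([], a)" using h A by (simp add: zgen_def)
    have "ceq srel (Suc n) [a + 1, a, a, a + 1] []"
      by (rule chain_ceq_S[where ws="[[a + 1, a + 1], []]"]) (use h A in \<open>simp_all add: hd_rw_def\<close>)
    then show ?thesis unfolding e1 e2 by simp
  next
    assume h: "i = a + 1"
    have e1: "pass1 i [a, a] = ([a, a + 1, a + 1, a], a + 1)" using h A by (simp add: zgen_def)
    have e2: "pass1 i [] = ([], a + 1)" using h A by (simp add: zgen_def)
    have "ceq srel (Suc n) [a, a + 1, a + 1, a] []"
      by (rule chain_ceq_S[where ws="[[a, a], []]"]) (use h A in \<open>simp_all add: hd_rw_def\<close>)
    then show ?thesis unfolding e1 e2 by simp
  next
    assume h: "a + 1 < i"
    have e1: "pass1 i [a, a] = ([a, a], i)" using h A by (simp add: zgen_def)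
    have e2: "pass1 i [] = ([], i)" using h A by (simp add: zgen_def)
    have "ceq srel (Suc n) [a, a] []"
      by (rule chain_ceq_S[where ws="[[]]"]) (use h A in \<open>simp_all add: hd_rw_def\<close>)
    then show ?thesis unfolding e1 e2 by simp
  qed
qed

lemma brel_sym: "brel n p q \<Longrightarrow> brel n q p"
  unfolding brel_def by auto

lemma srel_sym: "srel n p q \<Longrightarrow> srel n q p"
  unfolding srel_def using brel_sym by blast

lemma brel_srel: "brel n p q \<Longrightarrow> srel n p q"
  unfolding srel_def by blast

lemma LB_brel:
  assumes "brel n p q" "i \<le> n"
  shows "snd (pass1 i p) = snd (pass1 i q) \<and> ceq brel (Suc n) (fst (pass1 i p)) (fst (pass1 i q))"
proof -
  from assms(1) consider (c1) a b where "a < n" "b < n" "a + 2 \<le> b" "p = [a, b]" "q = [b, a]"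
    | (c2) a b where "a < n" "b < n" "b + 2 \<le> a" "p = [a, b]" "q = [b, a]"
    | (b1) a where "a + 2 \<le> n" "p = [a, a + 1, a]" "q = [a + 1, a, a + 1]"
    | (b2) a where "a + 2 \<le> n" "p = [a + 1, a, a + 1]" "q = [a, a + 1, a]"
    unfolding brel_def by blast
  then show ?thesis
  proof cases
    case c1 then show ?thesis using LBc[of a b n i] assms(2) by simp
  next
    case c2
    from LBc[of b a n i] c2 assms(2) have "snd (pass1 i q) = snd (pass1 i p)" "ceq brel (Suc n) (fst (pass1 i q)) (fst (pass1 i p))" by simp_all
    then show ?thesis using ceq_sym[of brel "Suc n" "fst (pass1 i q)" "fst (pass1 i p)", OF brel_sym] by simp
  next
    case b1 then show ?thesis using LBb[of a n i] assms(2) by simp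
  next
    case b2
    from LBb[of a n i] b2 assms(2) have "snd (pass1 i q) = snd (pass1 i p)" "ceq brel (Suc n) (fst (pass1 i q)) (fst (pass1 i p))" by simp_all
    then show ?thesis using ceq_sym[of brel "Suc n" "fst (pass1 i q)" "fst (pass1 i p)", OF brel_sym] by simp
  qed
qed

lemma LB_srel:
  assumes "srel n p q" "i \<le> n"
  shows "snd (pass1 i p) = snd (pass1 i q) \<and> ceq srel (Suc n) (fst (pass1 i p)) (fst (pass1 i q))"
proof -
  from assms(1) consider (b) "brel n p q" | (s1) a where "a < n" "p = [a, a]" "q = []"
    | (s2) a where "a < n" "p = []" "q = [a, a]"
    unfolding srel_def by blast
  then show ?thesis
  proof cases
    case b then show ?thesis using LB_brel[OF b assms(2)] ceq_mono[of brel srel "Suc n" "fst (pass1 i p)" "fst (pass1 i q)", OF brel_srel] by simp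
  next
    case s1 then show ?thesis using LBs[of a n i] assms(2) by simp
  next
    case s2
    from LBs[of a n i] s2 assms(2) have "snd (pass1 i q) = snd (pass1 i p)" "ceq srel (Suc n) (fst (pass1 i q)) (fst (pass1 i p))" by simp_all
    then show ?thesis using ceq_sym[of srel "Suc n" "fst (pass1 i q)" "fst (pass1 i p)", OF srel_sym] by simp
  qed
qed

lemma prel_sym: "prel Q n p q \<Longrightarrow> prel Q n q p"
  unfolding prel_def by auto

lemma LA_gen:
  assumes Qle: "\<And>i j. Q i j \<Longrightarrow> i \<le> j"
  and L0: "\<And>i j n k. Q i j \<Longrightarrow> j \<le> n \<Longrightarrow> k < n \<Longrightarrow>
    (fst (passw [i, j] [k]) = fst (passw [j + 1, i] [k]) \<or> ost False (fst (passw [i, j] [k])) (fst (passw [j + 1, i] [k])))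
    \<and> (snd (passw [i, j] [k]) = snd (passw [j + 1, i] [k]) \<or> prel Q n (snd (passw [i, j] [k])) (snd (passw [j + 1, i] [k])))"
  and mn: "\<And>n p q. brel n p q \<Longrightarrow> cr n p q"
  and sym: "\<And>n p q. cr n p q \<Longrightarrow> cr n q p"
  and pr: "prel Q n p q" and k: "k < n"
  shows "ceq cr (n + 2) (fst (passw p [k])) (fst (passw q [k])) \<and>
     (snd (passw p [k]) = snd (passw q [k]) \<or> prel Q n (snd (passw p [k])) (snd (passw q [k])))"
proof -
  have one: "ceq cr (n + 2) (fst (passw [i, j] [k])) (fst (passw [j + 1, i] [k])) \<and>
     (snd (passw [i, j] [k]) = snd (passw [j + 1, i] [k]) \<or> prel Q n (snd (passw [i, j] [k])) (snd (passw [j + 1, i] [k])))"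
    if q: "Q i j" "j \<le> n" for i j
  proof -
    from L0[OF q k] have a: "fst (passw [i, j] [k]) = fst (passw [j + 1, i] [k]) \<or> ost False (fst (passw [i, j] [k])) (fst (passw [j + 1, i] [k]))"
      and b: "snd (passw [i, j] [k]) = snd (passw [j + 1, i] [k]) \<or> prel Q n (snd (passw [i, j] [k])) (snd (passw [j + 1, i] [k]))" by auto
    have pv: "pvalid (n, [i, j])" "pvalid (n, [j + 1, i])" using q Qle[OF q(1)] by (auto simp: pvalid_Cons)
    have v1: "\<forall>x\<in>set (fst (passw [i, j] [k])). x < n + 2" using passw_valid[OF pv(1), of "[k]"] k by simp
    have v2: "\<forall>x\<in>set (fst (passw [j + 1, i] [k])). x < n + 2" using passw_valid[OF pv(2), of "[k]"] k by simp
    from a have "ceq brel (n + 2) (fst (passw [i, j] [k])) (fst (passw [j + 1, i] [k]))"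
    proof
      assume "ost False (fst (passw [i, j] [k])) (fst (passw [j + 1, i] [k]))"
      from ost_cstep_B[OF this v1 v2] show ?thesis by (rule r_into_rtranclp)
    qed simp
    note cm = ceq_mono[of brel cr, OF mn this]
    with b show ?thesis by simp
  qed
  from pr obtain i j where q: "Q i j" "j \<le> n" and pq: "p = [i, j] \<and> q = [j + 1, i] \<or> p = [j + 1, i] \<and> q = [i, j]"
    unfolding prel_def by blast
  from pq show ?thesis
  proof
    assume "p = [i, j] \<and> q = [j + 1, i]" then show ?thesis using one[OF q] by simp
  next
    assume h: "p = [j + 1, i] \<and> q = [i, j]"
    from one[OF q] have "ceq cr (n + 2) (fst (passw q [k])) (fst (passw p [k]))"
      "snd (passw q [k]) = snd (passw p [k]) \<or> prel Q n (snd (passw q [k])) (snd (passw p [k]))" using h by simp_all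
    then show ?thesis using ceq_sym[of cr "n + 2" "fst (passw q [k])" "fst (passw p [k])", OF sym]
      prel_sym[of Q n "snd (passw q [k])" "snd (passw p [k])"] by auto
  qed
qed

interpretation CB: Cside brel by unfold_locales (rule LB_brel)
interpretation CS: Cside srel by unfold_locales (rule LB_srel)

lemma LA_Blt: "prel (<) n p q \<Longrightarrow> k < n \<Longrightarrow> ceq brel (n + 2) (fst (passw p [k])) (fst (passw q [k])) \<and>
     (snd (passw p [k]) = snd (passw q [k]) \<or> prel (<) n (snd (passw p [k])) (snd (passw q [k])))"
  by (rule LA_gen[where Q="(<)", OF _ LA0 _ brel_sym]) auto
lemma LA_Ble: "prel (\<le>) n p q \<Longrightarrow> k < n \<Longrightarrow> ceq brel (n + 2) (fst (passw p [k])) (fst (passw q [k])) \<and>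
     (snd (passw p [k]) = snd (passw q [k]) \<or> prel (\<le>) n (snd (passw p [k])) (snd (passw q [k])))"
  by (rule LA_gen[where Q="(\<le>)", OF _ LA0le _ brel_sym]) auto
lemma LA_Slt: "prel (<) n p q \<Longrightarrow> k < n \<Longrightarrow> ceq srel (n + 2) (fst (passw p [k])) (fst (passw q [k])) \<and>
     (snd (passw p [k]) = snd (passw q [k]) \<or> prel (<) n (snd (passw p [k])) (snd (passw q [k])))"
  by (rule LA_gen[where Q="(<)", OF _ LA0 brel_srel srel_sym]) auto
lemma LA_Sle: "prel (\<le>) n p q \<Longrightarrow> k < n \<Longrightarrow> ceq srel (n + 2) (fst (passw p [k])) (fst (passw q [k])) \<and>
     (snd (passw p [k]) = snd (passw q [k]) \<or> prel (\<le>) n (snd (passw p [k])) (snd (passw q [k])))"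
  by (rule LA_gen[where Q="(\<le>)", OF _ LA0le brel_srel srel_sym]) auto

interpretation PBlt: Pside brel "(<)" by unfold_locales (simp, rule LA_Blt)
interpretation PBle: Pside brel "(\<le>)" by unfold_locales (simp, rule LA_Ble)
interpretation PSlt: Pside srel "(<)" by unfold_locales (simp, rule LA_Slt)
interpretation PSle: Pside srel "(\<le>)" by unfold_locales (simp, rule LA_Sle)

lemma mag_RP1: "r \<in> (mag_rels :: (pword \<Rightarrow>\<^sub>0 'k::field) set) \<Longrightarrow> \<exists>n p q. r = vec (n, p) - vec (n, q) \<and> prel (<) n p q"
  unfolding mag_rels_def prel_def by blast

lemma simp_RP1: "r \<in> (simp_rels :: (pword \<Rightarrow>\<^sub>0 'k::field) set) \<Longrightarrow> \<exists>n p q. r = vec (n, p) - vec (n, q) \<and> prel (\<le>) n p q"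
  unfolding simp_rels_def prel_def by blast

lemma mag_RP2: "prel (<) n p q \<Longrightarrow> vec (n, p) - vec (n, q) \<in> (mag_rels :: (pword \<Rightarrow>\<^sub>0 'k::field) set) \<or> vec (n, q) - vec (n, p) \<in> (mag_rels :: (pword \<Rightarrow>\<^sub>0 'k::field) set)"
  unfolding mag_rels_def prel_def by blast

lemma simp_RP2: "prel (\<le>) n p q \<Longrightarrow> vec (n, p) - vec (n, q) \<in> (simp_rels :: (pword \<Rightarrow>\<^sub>0 'k::field) set) \<or> vec (n, q) - vec (n, p) \<in> (simp_rels :: (pword \<Rightarrow>\<^sub>0 'k::field) set)"
  unfolding simp_rels_def prel_def by blast

lemma braid_RC1: "r \<in> (braid_rels :: (cword \<Rightarrow>\<^sub>0 'k::field) set) \<Longrightarrow>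
  \<exists>n p q. r = vec (n, p) - vec (n, q) \<and> brel n p q \<and> (\<forall>k\<in>set p. k < n) \<and> (\<forall>k\<in>set q. k < n)"
proof -
  assume "r \<in> braid_rels"
  then consider (c) n i j where "r = vec (n, [i, j]) - vec (n, [j, i])" "i < n" "j < n" "i + 2 \<le> j \<or> j + 2 \<le> i"
    | (b) n i where "r = vec (n, [i, i + 1, i]) - vec (n, [i + 1, i, i + 1])" "i + 2 \<le> n"
    unfolding braid_rels_def by blast
  then show ?thesis
  proof cases
    case c then show ?thesis unfolding brel_def
      by (rule_tac x=n in exI, rule_tac x="[i, j]" in exI, rule_tac x="[j, i]" in exI) auto
  next
    case b then show ?thesis unfolding brel_def
      by (rule_tac x=n in exI, rule_tac x="[i, i + 1, i]" in exI, rule_tac x="[i + 1, i, i + 1]" in exI) auto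
  qed
qed

lemma sym_RC1: "r \<in> (sym_rels :: (cword \<Rightarrow>\<^sub>0 'k::field) set) \<Longrightarrow>
  \<exists>n p q. r = vec (n, p) - vec (n, q) \<and> srel n p q \<and> (\<forall>k\<in>set p. k < n) \<and> (\<forall>k\<in>set q. k < n)"
proof -
  assume "r \<in> sym_rels"
  then consider (b) "r \<in> (braid_rels :: (cword \<Rightarrow>\<^sub>0 'k::field) set)" | (s) n i where "r = vec (n, [i, i]) - vec (n, [])" "i < n"
    unfolding sym_rels_def by blast
  then show ?thesis
  proof cases
    case b then show ?thesis using braid_RC1[OF b] brel_srel by blast
  next
    case s then show ?thesis unfolding srel_def
      by (rule_tac x=n in exI, rule_tac x="[i, i]" in exI, rule_tac x="[]" in exI) auto
  qed
qed

lemma braid_RC2: "brel n p q \<Longrightarrow> vec (n, p) - vec (n, q) \<in> (braid_rels :: (cword \<Rightarrow>\<^sub>0 'k::field) set) \<or> vec (n, q) - vec (n, p) \<in> (braid_rels :: (cword \<Rightarrow>\<^sub>0 'k::field) set)"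
  unfolding brel_def braid_rels_def by blast

lemma sym_RC2: "srel n p q \<Longrightarrow> vec (n, p) - vec (n, q) \<in> (sym_rels :: (cword \<Rightarrow>\<^sub>0 'k::field) set) \<or> vec (n, q) - vec (n, p) \<in> (sym_rels :: (cword \<Rightarrow>\<^sub>0 'k::field) set)"
proof -
  assume "srel n p q"
  then consider (b) "brel n p q" | (s1) a where "a < n" "p = [a, a]" "q = []" | (s2) a where "a < n" "p = []" "q = [a, a]"
    unfolding srel_def by blast
  then show ?thesis
  proof cases
    case b then show ?thesis using braid_RC2[OF b] unfolding sym_rels_def by blast
  next
    case s1 then show ?thesis unfolding sym_rels_def by blast
  next
    case s2 then show ?thesis unfolding sym_rels_def by blast
  qed
qed

theorem mainTheorem9:
  shows "descends (mag_rels :: (pword \<Rightarrow>\<^sub>0 'k::field) set) braid_rels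
       \<and> descends (simp_rels :: (pword \<Rightarrow>\<^sub>0 'k::field) set) braid_rels
       \<and> descends (mag_rels :: (pword \<Rightarrow>\<^sub>0 'k::field) set) sym_rels
       \<and> descends (simp_rels :: (pword \<Rightarrow>\<^sub>0 'k::field) set) sym_rels"
proof -
  interpret M1: Main brel "(<)" "mag_rels :: (pword \<Rightarrow>\<^sub>0 'k::field) set" braid_rels
    by unfold_locales (erule mag_RP1, erule mag_RP2, erule braid_RC1, erule braid_RC2)
  interpret M2: Main brel "(\<le>)" "simp_rels :: (pword \<Rightarrow>\<^sub>0 'k::field) set" braid_rels
    by unfold_locales (erule simp_RP1, erule simp_RP2, erule braid_RC1, erule braid_RC2)
  interpret M3: Main srel "(<)" "mag_rels :: (pword \<Rightarrow>\<^sub>0 'k::field) set" sym_rels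
    by unfold_locales (erule mag_RP1, erule mag_RP2, erule sym_RC1, erule sym_RC2)
  interpret M4: Main srel "(\<le>)" "simp_rels :: (pword \<Rightarrow>\<^sub>0 'k::field) set" sym_rels
    by unfold_locales (erule simp_RP1, erule simp_RP2, erule sym_RC1, erule sym_RC2)
  show ?thesis using M1.descends M2.descends M3.descends M4.descends by blast
qed

end
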